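(* Let $K$ be a field and let $L$ be a finite modular lattice. Then $L$ is distributive if and only if $H[L]=K[L]/I_L$ admits a combinatorial Koszul filtration.
   Context: $K[L]$ denotes the polynomial ring over $K$ whose variables are the elements of $L$. For incomparable $a,b\in L$, the binomial $ab-(a\vee b)(a\wedge b)$ is called a basic binomial; $I_L$ is the ideal of $K[L]$ generated by all basic binomials, and $H[L]=K[L]/I_L$, standard graded with $\deg(a)=1$ for each $a\in L$. A lattice is modular if $x\le b$ implies $x\vee(a\wedge b)=(x\vee a)\wedge b$ for all $x,a,b$. For a standard graded $K$-algebra $R$ with maximal graded ideal $\mathfrak m$, a collection $\mathcal F$ of ideals of $R$ is a Koszul filtration if: (i) every ideal in $\mathcal F$ is generated by linear forms; (ii) $0$ and $\mathfrak m$ belong to $\mathcal F$; (iii) for every ideal $0\ne I\in\mathcal F$ there exists $J\in\mathcal F$ with $J\subset I$, $I/J$ cyclic, and $J:I\in\mathcal F$. A Koszul filtration of $H[L]$ is called combinatorial if every ideal in it is generated by residue classes $a+I_L$ of some elements $a\in L$ (i.e., of variables). *)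

theory Defs
  imports Main "HOL-Library.Poly_Mapping"
begin

text \<open>The polynomial ring K[L] in the variables a \<in> L (type 'a) over K,
  represented as finitely supported maps from monomials (finitely supported
  exponent vectors) to coefficients.\<close>
type_synonym ('a, 'k) mpoly = "('a \<Rightarrow>\<^sub>0 nat) \<Rightarrow>\<^sub>0 'k"

definition Var :: "'a \<Rightarrow> ('a, 'k::comm_ring_1) mpoly" where
  "Var a = Poly_Mapping.single (Poly_Mapping.single a 1) 1"

definition mdeg :: "('a \<Rightarrow>\<^sub>0 nat) \<Rightarrow> nat" where
  "mdeg m = (\<Sum>v\<in>Poly_Mapping.keys m. Poly_Mapping.lookup m v)"

definition linear_form :: "('a, 'k::comm_ring_1) mpoly \<Rightarrow> bool" where
  "linear_form p \<longleftrightarrow> (\<forall>m\<in>Poly_Mapping.keys p. mdeg m = 1)"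

definition ideal_gen :: "'r::comm_ring_1 set \<Rightarrow> 'r set" where
  "ideal_gen S = {x. \<exists>T c. finite T \<and> T \<subseteq> S \<and> x = (\<Sum>t\<in>T. c t * t)}"

definition colon :: "'r::comm_ring_1 set \<Rightarrow> 'r set \<Rightarrow> 'r set" where
  "colon J I = {r. \<forall>x\<in>I. r * x \<in> J}"

definition basic_binomial :: "'a::lattice \<Rightarrow> 'a \<Rightarrow> ('a, 'k::comm_ring_1) mpoly" where
  "basic_binomial a b = Var a * Var b - Var (sup a b) * Var (inf a b)"

text \<open>The ideal I_L of K[L], L being the whole (finite) lattice type 'a.\<close>
definition I_L :: "('a::lattice, 'k::comm_ring_1) mpoly set" where
  "I_L = ideal_gen {basic_binomial a b | a b. \<not> a \<le> b \<and> \<not> b \<le> a}"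

definition modular_lattice :: "'a::lattice itself \<Rightarrow> bool" where
  "modular_lattice _ \<longleftrightarrow>
     (\<forall>x a b::'a. x \<le> b \<longrightarrow> sup x (inf a b) = inf (sup x a) b)"

text \<open>Ideals of H[L] = K[L]/I_L are represented by their preimages in K[L],
  i.e. ideals of K[L] containing I_L. Under this correspondence: the zero ideal
  is I_L; the maximal graded ideal is I_L + (all variables); an ideal of H[L]
  generated by linear forms is I_L + (V) for a set V of linear forms; I/J cyclic
  means I = J + (f) for some f; and the colon ideal J:I in H[L] corresponds to
  the colon J':I' in K[L].\<close>
definition koszul_filtration_H :: "('a::lattice, 'k::field) mpoly set set \<Rightarrow> bool" where
  "koszul_filtration_H F \<longleftrightarrow>
     (\<forall>I\<in>F. \<exists>V. (\<forall>v\<in>V. linear_form v) \<and> I = ideal_gen (I_L \<union> V)) \<and>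
     I_L \<in> F \<and>
     ideal_gen (I_L \<union> range Var) \<in> F \<and>
     (\<forall>I\<in>F. I \<noteq> I_L \<longrightarrow>
        (\<exists>J\<in>F. J \<subset> I \<and> (\<exists>f. I = ideal_gen (J \<union> {f})) \<and> colon J I \<in> F))"

definition combinatorial_koszul_filtration_H ::
    "('a::lattice, 'k::field) mpoly set set \<Rightarrow> bool" where
  "combinatorial_koszul_filtration_H F \<longleftrightarrow>
     koszul_filtration_H F \<and>
     (\<forall>I\<in>F. \<exists>S. I = ideal_gen (I_L \<union> Var ` S))"

end

theory Submission
  imports Defs
begin


abbreviation E :: "'a \<Rightarrow> ('a \<Rightarrow>\<^sub>0 nat)" where "E u \<equiv> Poly_Mapping.single u (Suc 0)"

definition psi :: "('a \<Rightarrow>\<^sub>0 nat) set \<Rightarrow> ('a, 'k::comm_ring_1) mpoly \<Rightarrow> 'k" where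
  "psi C p = (\<Sum>m\<in>Poly_Mapping.keys p \<inter> C. Poly_Mapping.lookup p m)"

lemma psi_superset:
  assumes "finite A" "Poly_Mapping.keys p \<inter> C \<subseteq> A" "A \<subseteq> C"
  shows "psi C p = (\<Sum>m\<in>A. Poly_Mapping.lookup p m)"
  unfolding psi_def
  by (rule sum.mono_neutral_left) (use assms in \<open>auto simp: in_keys_iff\<close>)

lemma psi_add: "psi C (p + q) = psi C p + psi C q"
proof -
  let ?A = "(Poly_Mapping.keys p \<union> Poly_Mapping.keys q) \<inter> C"
  have "psi C (p + q) = (\<Sum>m\<in>?A. Poly_Mapping.lookup (p+q) m)"
    by (rule psi_superset) (auto simp: in_keys_iff lookup_add)
  also have "\<dots> = (\<Sum>m\<in>?A. Poly_Mapping.lookup p m) + (\<Sum>m\<in>?A. Poly_Mapping.lookup q m)"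
    by (simp add: lookup_add sum.distrib)
  also have "\<dots> = psi C p + psi C q"
    by (subst (1 2) psi_superset[where A="?A"]) auto
  finally show ?thesis .
qed

lemma psi_zero [simp]: "psi C 0 = 0"
  by (simp add: psi_def)

lemma psi_uminus: "psi C (- p) = - psi C p"
  by (simp add: psi_def sum_negf)

lemma psi_diff: "psi C (p - q) = psi C p - psi C q"
  using psi_add[of C p "-q"] by (simp add: psi_uminus)

lemma psi_sum: "psi C (sum f A) = (\<Sum>i\<in>A. psi C (f i))"
  by (induction A rule: infinite_finite_induct) (auto simp: psi_add)

lemma psi_single: "psi C (Poly_Mapping.single m a) = (if m \<in> C then a else 0)"
  by (cases "a = 0") (auto simp: psi_def)

lemma poly_expand:
  "p = (\<Sum>w\<in>Poly_Mapping.keys p. Poly_Mapping.single w (Poly_Mapping.lookup p w))"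
  by (rule poly_mapping_eqI)
     (auto simp: lookup_sum lookup_single when_def in_keys_iff
           intro!: sum.neutral[symmetric] trans[OF _ sum.remove[of _ k]] split: if_splits)


lemma single_mult_expand:
  "Poly_Mapping.single w a * g =
   (\<Sum>k\<in>Poly_Mapping.keys g. Poly_Mapping.single (w + k) (a * Poly_Mapping.lookup g k))"
proof -
  have "Poly_Mapping.single w a * g = Poly_Mapping.single w a *
     (\<Sum>k\<in>Poly_Mapping.keys g. Poly_Mapping.single k (Poly_Mapping.lookup g k))"
    by (subst poly_expand[of g]) simp
  also have "\<dots> = (\<Sum>k\<in>Poly_Mapping.keys g. Poly_Mapping.single (w + k) (a * Poly_Mapping.lookup g k))"
    by (simp add: sum_distrib_left mult_single)
  finally show ?thesis .
qed

definition kills :: "('a \<Rightarrow>\<^sub>0 nat) set \<Rightarrow> ('a, 'k::comm_ring_1) mpoly set \<Rightarrow> bool" where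
  "kills C B \<longleftrightarrow> (\<forall>c. \<forall>b\<in>B. psi C (c * b) = 0)"

lemma killsI:
  assumes "\<And>w a b. b \<in> B \<Longrightarrow> psi C (Poly_Mapping.single w a * b) = 0"
  shows "kills C B"
  unfolding kills_def
proof (intro allI ballI)
  fix c b assume b: "b \<in> B"
  have "c * b = (\<Sum>w\<in>Poly_Mapping.keys c. Poly_Mapping.single w (Poly_Mapping.lookup c w) * b)"
    by (subst poly_expand[of c]) (simp add: sum_distrib_right)
  then show "psi C (c * b) = 0" using assms[OF b] by (simp add: psi_sum)
qed

lemma kills_ideal_gen:
  assumes "kills C B" shows "kills C (ideal_gen B)"
  unfolding kills_def
proof (intro allI ballI)
  fix c x assume "x \<in> ideal_gen B"
  then obtain T d where T: "finite T" "T \<subseteq> B" "x = (\<Sum>t\<in>T. d t * t)"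
    unfolding ideal_gen_def by blast
  have "c * x = (\<Sum>t\<in>T. (c * d t) * t)" by (simp add: T sum_distrib_left mult.assoc)
  then show "psi C (c * x) = 0" using assms T unfolding kills_def by (auto simp: psi_sum intro!: sum.neutral)
qed

lemma kills_mem:
  assumes "kills C B" "x \<in> ideal_gen B" shows "psi C x = 0"
  using kills_ideal_gen[OF assms(1)] assms(2) unfolding kills_def
  by (metis mult_1)

lemma kills_Un: "kills C A \<Longrightarrow> kills C B \<Longrightarrow> kills C (A \<union> B)"
  unfolding kills_def by blast

lemma Var_mult: "(Var u :: ('a,'k::comm_ring_1) mpoly) * Var v = Poly_Mapping.single (E u + E v) 1"
  by (simp add: Var_def mult_single)

lemma single_Var: "Poly_Mapping.single w a * (Var u :: ('a,'k::comm_ring_1) mpoly) =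
   Poly_Mapping.single (w + E u) a"
  by (simp add: Var_def mult_single)

lemma single_Var2: "Poly_Mapping.single w a * ((Var u :: ('a,'k::comm_ring_1) mpoly) * Var v) =
   Poly_Mapping.single (w + E u + E v) a"
  by (simp add: Var_mult mult_single add.assoc)

lemma kills_I_L:
  fixes C :: "('a::lattice \<Rightarrow>\<^sub>0 nat) set"
  assumes "\<And>w u v. \<not> u \<le> v \<Longrightarrow> \<not> v \<le> u \<Longrightarrow>
            (w + E u + E v \<in> C \<longleftrightarrow> w + E (sup u v) + E (inf u v) \<in> C)"
  shows "kills C (I_L :: ('a,'k::comm_ring_1) mpoly set)"
  unfolding I_L_def
  apply (rule kills_ideal_gen, rule killsI)
  using assms by (auto simp: basic_binomial_def right_diff_distrib single_Var2 psi_diff psi_single)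

lemma kills_Var:
  assumes "\<And>w s. s \<in> S \<Longrightarrow> w + E s \<notin> C"
  shows "kills C ((Var ` S) :: ('a,'k::comm_ring_1) mpoly set)"
  by (rule killsI) (use assms in \<open>auto simp: single_Var psi_single\<close>)


lemma mdeg_superset: "finite A \<Longrightarrow> Poly_Mapping.keys m \<subseteq> A \<Longrightarrow>
   mdeg m = (\<Sum>v\<in>A. Poly_Mapping.lookup m v)"
  unfolding mdeg_def by (rule sum.mono_neutral_left) (auto simp: in_keys_iff)

lemma mdeg_add: "mdeg (m + n) = mdeg m + mdeg n"
proof -
  let ?A = "Poly_Mapping.keys m \<union> Poly_Mapping.keys n"
  have "mdeg (m + n) = (\<Sum>v\<in>?A. Poly_Mapping.lookup (m+n) v)"
    by (rule mdeg_superset) (auto simp: in_keys_iff lookup_add)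
  moreover have "mdeg m = (\<Sum>v\<in>?A. Poly_Mapping.lookup m v)" "mdeg n = (\<Sum>v\<in>?A. Poly_Mapping.lookup n v)"
    by (rule mdeg_superset; auto)+
  ultimately show ?thesis by (simp add: lookup_add sum.distrib)
qed

lemma mdeg_E [simp]: "mdeg (E u) = 1"
  by (simp add: mdeg_def)

lemma mdeg_E' [simp]: "mdeg (Poly_Mapping.single u (Suc 0)) = 1"
  by (simp add: mdeg_def)

lemma mdeg_zero [simp]: "mdeg 0 = 0"
  by (simp add: mdeg_def)

lemma mdeg_eq_0: "mdeg m = 0 \<longleftrightarrow> m = 0"
proof
  assume "mdeg m = 0"
  then have "\<forall>v\<in>Poly_Mapping.keys m. Poly_Mapping.lookup m v = 0"
    unfolding mdeg_def by simp
  then show "m = 0" by (metis all_not_in_conv in_keys_iff keys_eq_empty)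
qed simp

lemma E_lookup: "Poly_Mapping.lookup (E u) x = (if x = u then 1 else 0)"
  by (simp add: lookup_single)

lemma E_lookup': "Poly_Mapping.lookup (Poly_Mapping.single u (Suc 0)) x = (if x = u then 1 else 0)"
  by (simp add: lookup_single)

lemma pair_eq:
  assumes "E s + E t = E u + E v"
  shows "(s = u \<and> t = v) \<or> (s = v \<and> t = u)"
proof -
  have h: "\<And>x. (if x = s then 1 else 0) + (if x = t then 1 else 0) =
        (if x = u then 1 else (0::nat)) + (if x = v then 1 else 0)"
    using arg_cong[OF assms, of "\<lambda>m. Poly_Mapping.lookup m x" for x]
    by (simp add: lookup_add E_lookup E_lookup')
  have "s = u \<or> s = v" using h[of s] by (auto split: if_splits)
  moreover have "t = u \<or> t = v" using h[of t] by (auto split: if_splits)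
  moreover have "u = s \<or> u = t" using h[of u] by (auto split: if_splits)
  moreover have "v = s \<or> v = t" using h[of v] by (auto split: if_splits)
  moreover have "s = t \<Longrightarrow> u = v" using h[of s] by (auto split: if_splits)
  moreover have "u = v \<Longrightarrow> s = t" using h[of u] by (auto split: if_splits)
  ultimately show ?thesis by blast
qed

lemma w_pair:
  assumes "w + E u + E v = E s + E t"
  shows "w = 0 \<and> ((s = u \<and> t = v) \<or> (s = v \<and> t = u))"
proof -
  have "mdeg (w + E u + E v) = mdeg (E s + E t)" using assms by simp
  then have "mdeg w = 0" by (simp add: mdeg_add)
  then have "w = 0" by (simp add: mdeg_eq_0)
  moreover have "E s + E t = E u + E v" using assms \<open>w = 0\<close> by simp
  ultimately show ?thesis using pair_eq[of s t u v] by auto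
qed

lemma w_single_ne: "w + E u + E v \<noteq> E s"
proof
  assume "w + E u + E v = E s"
  then have "mdeg (w + E u + E v) = mdeg (E s)" by simp
  then show False by (simp add: mdeg_add)
qed

lemma w_E_eq: assumes "w + E s = E u" shows "s = u"
proof -
  have "Poly_Mapping.lookup (w + E s) s = Poly_Mapping.lookup (E u) s" using assms by simp
  then have "Poly_Mapping.lookup w s + 1 = (if s = u then 1 else 0)"
    by (simp add: lookup_add lookup_single when_def)
  then show ?thesis by (auto split: if_splits)
qed

lemma w_E_ne0: "w + E s \<noteq> 0"
proof
  assume "w + E s = 0"
  then have "Poly_Mapping.lookup (w + E s) s = 0" by simp
  then show False by (simp add: lookup_add)
qed

lemma psi_sing: "psi {m} p = Poly_Mapping.lookup p m"
  by (cases "m \<in> Poly_Mapping.keys p") (auto simp: psi_def in_keys_iff Int_insert_right)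

lemma kills_E_I_L: "kills {E u} (I_L :: ('a::lattice,'k::comm_ring_1) mpoly set)"
  by (rule kills_I_L) (simp only: singleton_iff w_single_ne)

lemma kills_E_Var: "u \<notin> S \<Longrightarrow> kills {E u} ((Var ` S) :: ('a,'k::comm_ring_1) mpoly set)"
  by (rule kills_Var) (metis singletonD w_E_eq)

lemma kills_0_I_L: "kills {0} (I_L :: ('a::lattice,'k::comm_ring_1) mpoly set)"
  by (rule kills_I_L) (metis add.assoc singletonD w_E_ne0)

lemma kills_0_Var: "kills {0} ((Var ` S) :: ('a,'k::comm_ring_1) mpoly set)"
  by (rule kills_Var) (metis singletonD w_E_ne0)

definition Cpq :: "'a::lattice \<Rightarrow> 'a \<Rightarrow> ('a \<Rightarrow>\<^sub>0 nat) set" where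
  "Cpq p q = {E s + E t | s t. inf s t = p \<and> sup s t = q}"

lemma Cpq_pair: "E s + E t \<in> Cpq p q \<longleftrightarrow> inf s t = p \<and> sup s t = q"
proof
  assume "E s + E t \<in> Cpq p q"
  then obtain x y where "E s + E t = E x + E y" "inf x y = p" "sup x y = q"
    unfolding Cpq_def by blast
  then show "inf s t = p \<and> sup s t = q"
    using pair_eq[of s t x y] by (auto simp: inf_commute sup_commute)
qed (auto simp: Cpq_def)

lemma Cpq_w: "w + E u + E v \<in> Cpq p q \<longleftrightarrow> w = 0 \<and> inf u v = p \<and> sup u v = q"
proof
  assume "w + E u + E v \<in> Cpq p q"
  then obtain s t where "w + E u + E v = E s + E t" "inf s t = p" "sup s t = q"
    unfolding Cpq_def by auto
  then show "w = 0 \<and> inf u v = p \<and> sup u v = q"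
    using w_pair by (metis inf_commute sup_commute)
next
  assume "w = 0 \<and> inf u v = p \<and> sup u v = q"
  then show "w + E u + E v \<in> Cpq p q" using Cpq_pair by auto
qed

lemma kills_Cpq_I_L: "kills (Cpq p q) (I_L :: ('a::lattice,'k::comm_ring_1) mpoly set)"
proof (rule kills_I_L)
  fix w :: "'a \<Rightarrow>\<^sub>0 nat" and u v :: 'a
  have "inf (sup u v) (inf u v) = inf u v" "sup (sup u v) (inf u v) = sup u v"
    by (simp_all add: inf.absorb2 sup.absorb1 le_infI1)
  then show "(w + E u + E v \<in> Cpq p q) = (w + E (sup u v) + E (inf u v) \<in> Cpq p q)"
    by (simp add: Cpq_w)
qed

lemma kills_Cpq_Var:
  assumes "\<And>s. s \<in> S \<Longrightarrow> \<not> (p \<le> s \<and> s \<le> q)"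
  shows "kills (Cpq p q) ((Var ` S) :: ('a::lattice,'k::comm_ring_1) mpoly set)"
proof (rule kills_Var)
  fix w s assume s: "s \<in> S"
  show "w + E s \<notin> Cpq p q"
  proof
    assume "w + E s \<in> Cpq p q"
    then obtain x y where xy: "w + E s = E x + E y" "inf x y = p" "sup x y = q"
      unfolding Cpq_def by auto
    have "Poly_Mapping.lookup (w + E s) s \<ge> 1" by (simp add: lookup_add)
    then have "s = x \<or> s = y" using xy(1) by (auto simp: lookup_add E_lookup E_lookup' split: if_splits)
    then have "p \<le> s \<and> s \<le> q" using xy by auto
    with assms[OF s] show False by simp
  qed
qed

lemma basic_binomial_in_I_L:
  "\<not> u \<le> v \<Longrightarrow> \<not> v \<le> u \<Longrightarrow> (basic_binomial u v :: ('a::lattice,'k::comm_ring_1) mpoly) \<in> I_L"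
  unfolding I_L_def ideal_gen_def
  by (rule CollectI, rule exI[of _ "{basic_binomial u v}"], rule exI[of _ "\<lambda>_. 1"]) auto


definition is_ideal :: "'r::comm_ring_1 set \<Rightarrow> bool" where
  "is_ideal I \<longleftrightarrow> 0 \<in> I \<and> (\<forall>x\<in>I. \<forall>y\<in>I. x + y \<in> I) \<and> (\<forall>c. \<forall>x\<in>I. c * x \<in> I)"

lemma sum_if_restrict:
  fixes c :: "'r::comm_ring_1 \<Rightarrow> 'r"
  shows "finite U \<Longrightarrow> T \<subseteq> U \<Longrightarrow> (\<Sum>t\<in>U. (if t \<in> T then c t else 0) * t) = (\<Sum>t\<in>T. c t * t)"
  by (rule sum.mono_neutral_cong_right) auto

lemma ideal_gen_is_ideal: "is_ideal (ideal_gen B)"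
  unfolding is_ideal_def
proof (intro conjI ballI allI)
  show "0 \<in> ideal_gen B" unfolding ideal_gen_def by (rule CollectI, rule exI[of _ "{}"]) auto
next
  fix x y assume "x \<in> ideal_gen B" "y \<in> ideal_gen B"
  then obtain T1 c1 T2 c2 where A: "finite T1" "T1 \<subseteq> B" "x = (\<Sum>t\<in>T1. c1 t * t)"
    "finite T2" "T2 \<subseteq> B" "y = (\<Sum>t\<in>T2. c2 t * t)" unfolding ideal_gen_def by blast
  define d where "d t = (if t \<in> T1 then c1 t else 0) + (if t \<in> T2 then c2 t else 0)" for t
  have "(\<Sum>t\<in>T1 \<union> T2. d t * t) = x + y"
    using A by (simp add: d_def distrib_right sum.distrib sum_if_restrict)
  then show "x + y \<in> ideal_gen B" unfolding ideal_gen_def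
    by (intro CollectI exI[of _ "T1 \<union> T2"] exI[of _ d]) (use A in auto)
next
  fix c x assume "x \<in> ideal_gen B"
  then obtain T d where A: "finite T" "T \<subseteq> B" "x = (\<Sum>t\<in>T. d t * t)"
    unfolding ideal_gen_def by blast
  have "c * x = (\<Sum>t\<in>T. (c * d t) * t)" by (simp add: A sum_distrib_left mult.assoc)
  then show "c * x \<in> ideal_gen B" unfolding ideal_gen_def
    by (intro CollectI exI[of _ T] exI[of _ "\<lambda>t. c * d t"]) (use A in auto)
qed

lemma is_ideal_sum: "is_ideal I \<Longrightarrow> (\<And>t. t \<in> T \<Longrightarrow> f t \<in> I) \<Longrightarrow> sum f T \<in> I"
  unfolding is_ideal_def
  by (induction T rule: infinite_finite_induct) auto

lemma is_ideal_diff: "is_ideal I \<Longrightarrow> x \<in> I \<Longrightarrow> y \<in> I \<Longrightarrow> x - y \<in> I"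
  unfolding is_ideal_def by (metis diff_conv_add_uminus mult_minus1)

lemma is_ideal_mult: "is_ideal I \<Longrightarrow> x \<in> I \<Longrightarrow> c * x \<in> I"
  unfolding is_ideal_def by blast

lemma is_ideal_mult2: "is_ideal I \<Longrightarrow> x \<in> I \<Longrightarrow> x * c \<in> I"
  unfolding is_ideal_def by (metis mult.commute)

lemma is_ideal_add: "is_ideal I \<Longrightarrow> x \<in> I \<Longrightarrow> y \<in> I \<Longrightarrow> x + y \<in> I"
  unfolding is_ideal_def by blast

lemma gen_subset: "B \<subseteq> ideal_gen B"
proof
  fix b assume "b \<in> B"
  then show "b \<in> ideal_gen B" unfolding ideal_gen_def
    by (intro CollectI exI[of _ "{b}"] exI[of _ "\<lambda>_. 1"]) auto
qed

lemma ideal_gen_least: "is_ideal I \<Longrightarrow> B \<subseteq> I \<Longrightarrow> ideal_gen B \<subseteq> I"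
proof
  fix x assume I: "is_ideal I" "B \<subseteq> I" and "x \<in> ideal_gen B"
  then obtain T d where A: "finite T" "T \<subseteq> B" "x = (\<Sum>t\<in>T. d t * t)"
    unfolding ideal_gen_def by blast
  show "x \<in> I" unfolding A(3) by (rule is_ideal_sum[OF I(1)]) (use A I is_ideal_mult in blast)
qed

lemma ideal_gen_mono: "A \<subseteq> B \<Longrightarrow> ideal_gen A \<subseteq> ideal_gen B"
  by (rule ideal_gen_least[OF ideal_gen_is_ideal]) (rule subset_trans[OF _ gen_subset])

lemma ideal_gen_idem: "ideal_gen (ideal_gen A) = ideal_gen A"
  by (rule subset_antisym[OF ideal_gen_least[OF ideal_gen_is_ideal subset_refl] gen_subset])

lemma ideal_gen_gen_Un: "ideal_gen (ideal_gen A \<union> B) = ideal_gen (A \<union> B)"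
proof
  show "ideal_gen (ideal_gen A \<union> B) \<subseteq> ideal_gen (A \<union> B)"
    by (rule ideal_gen_least[OF ideal_gen_is_ideal])
       (metis Un_least Un_upper1 Un_upper2 dual_order.trans gen_subset ideal_gen_mono)
  show "ideal_gen (A \<union> B) \<subseteq> ideal_gen (ideal_gen A \<union> B)"
    by (rule ideal_gen_mono) (use gen_subset in blast)
qed

lemma ideal_gen_mem: "x \<in> B \<Longrightarrow> x \<in> ideal_gen B"
  using gen_subset[of B] by (rule subsetD)

abbreviation gI :: "'a::lattice set \<Rightarrow> ('a,'k::comm_ring_1) mpoly set" where
  "gI S \<equiv> ideal_gen (I_L \<union> Var ` S)"

lemma I_L_is_ideal: "is_ideal I_L"
  unfolding I_L_def by (rule ideal_gen_is_ideal)

lemma gI_empty: "gI {} = I_L"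
  by (simp add: I_L_def ideal_gen_idem)

lemma I_L_sub_gI: "I_L \<subseteq> gI S"
  using gen_subset[of "I_L \<union> Var ` S"] by (rule subset_trans[rotated]) simp

lemma Var_in_gI: "s \<in> S \<Longrightarrow> Var s \<in> gI S"
  by (rule ideal_gen_mem) simp

lemma gI_mono: "S \<subseteq> S' \<Longrightarrow> gI S \<subseteq> gI S'"
  by (rule ideal_gen_mono) (use image_mono in fast)

lemma lookup_Var: "Poly_Mapping.lookup (Var u :: ('a,'k::comm_ring_1) mpoly) m = (if m = E u then 1 else 0)"
  by (simp add: Var_def lookup_single)

lemma Var_in_gI_iff:
  "(Var u :: ('a::lattice,'k::field) mpoly) \<in> gI S \<longleftrightarrow> u \<in> S"
proof
  assume A: "(Var u :: ('a::lattice,'k::field) mpoly) \<in> gI S"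
  show "u \<in> S"
  proof (rule ccontr)
    assume "u \<notin> S"
    then have "kills {E u} (I_L \<union> (Var ` S) :: ('a,'k) mpoly set)"
      by (intro kills_Un kills_E_I_L kills_E_Var)
    from kills_mem[OF this A] show False by (simp add: psi_sing lookup_Var)
  qed
qed (rule Var_in_gI)

lemma gI_inj:
  assumes "(gI S :: ('a::lattice,'k::field) mpoly set) = gI S'" shows "S = S'"
  using Var_in_gI_iff[where 'k='k, of _ S] Var_in_gI_iff[where 'k='k, of _ S'] assms by blast

lemma pm_add_left_cancel: "((w::'a \<Rightarrow>\<^sub>0 nat) + x = w + k) = (x = k)"
  by (auto simp: poly_mapping_eq_iff lookup_add fun_eq_iff)

lemma lookup_single_mult:
  fixes w :: "'a \<Rightarrow>\<^sub>0 nat" and f :: "('a,'k::comm_ring_1) mpoly"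
  shows "Poly_Mapping.lookup (Poly_Mapping.single w a * f) (w + k) = a * Poly_Mapping.lookup f k"
proof -
  have "Poly_Mapping.lookup (Poly_Mapping.single w a * f) (w + k) =
        (\<Sum>k'\<in>Poly_Mapping.keys f. (a * Poly_Mapping.lookup f k' when k' = k))"
    by (subst single_mult_expand) (auto simp: lookup_sum lookup_single when_def pm_add_left_cancel intro!: sum.cong)
  also have "\<dots> = a * Poly_Mapping.lookup f k"
    by (simp add: when_def pm_add_left_cancel sum.delta' in_keys_iff)
  finally show ?thesis .
qed

lemma lookup_single_mult_0:
  fixes w :: "'a \<Rightarrow>\<^sub>0 nat" and f :: "('a,'k::comm_ring_1) mpoly"
  assumes "\<And>k. m \<noteq> w + k"
  shows "Poly_Mapping.lookup (Poly_Mapping.single w a * f) m = 0"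
  using assms by (subst single_mult_expand) (force simp: lookup_sum lookup_single when_def intro!: sum.neutral)

lemma decomp_E:
  assumes "w + k = E u" shows "(w = 0 \<and> k = E u) \<or> (w = E u \<and> k = 0)"
proof -
  have "mdeg w + mdeg k = 1" using arg_cong[OF assms, of mdeg] by (simp add: mdeg_add)
  then have "mdeg w = 0 \<or> mdeg k = 0" by arith
  then show ?thesis using assms by (auto simp: mdeg_eq_0)
qed

lemma lookup_mult_E:
  fixes c f :: "('a,'k::comm_ring_1) mpoly"
  shows "Poly_Mapping.lookup (c * f) (E u) =
   Poly_Mapping.lookup c 0 * Poly_Mapping.lookup f (E u) + Poly_Mapping.lookup c (E u) * Poly_Mapping.lookup f 0"
proof -
  let ?g = "\<lambda>w. Poly_Mapping.lookup (Poly_Mapping.single w (Poly_Mapping.lookup c w) * f) (E u)"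
  have cf: "c * f = (\<Sum>w\<in>Poly_Mapping.keys c. Poly_Mapping.single w (Poly_Mapping.lookup c w) * f)"
    by (subst poly_expand[of c]) (simp add: sum_distrib_right)
  have g0: "?g w = 0" if "w \<noteq> 0" "w \<noteq> E u" for w
    by (rule lookup_single_mult_0) (use that decomp_E in metis)
  have gz: "?g 0 = Poly_Mapping.lookup c 0 * Poly_Mapping.lookup f (E u)"
    using lookup_single_mult[of 0 _ f "E u"] by simp
  have gE: "?g (E u) = Poly_Mapping.lookup c (E u) * Poly_Mapping.lookup f 0"
    using lookup_single_mult[of "E u" _ f 0] by simp
  have "Poly_Mapping.lookup (c * f) (E u) = (\<Sum>w\<in>Poly_Mapping.keys c. ?g w)"
    by (simp add: cf lookup_sum)
  also have "\<dots> = (\<Sum>w\<in>Poly_Mapping.keys c \<union> {0, E u}. ?g w)"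
    by (rule sum.mono_neutral_left) (auto simp: in_keys_iff)
  also have "\<dots> = (\<Sum>w\<in>{0, E u}. ?g w)"
    by (rule sum.mono_neutral_right) (auto simp: g0)
  also have "\<dots> = ?g 0 + ?g (E u)"
    by (simp add: w_E_ne0[of 0, simplified, symmetric])
  finally show ?thesis by (simp add: gz gE)
qed

lemma ZZEND: True by simp


lemma class_lattice: "class.lattice (inf :: 'a::lattice \<Rightarrow> _) (\<le>) (<) sup"
  by unfold_locales

lemma not_distrib_witness:
  assumes "\<not> class.distrib_lattice (inf :: 'a::lattice \<Rightarrow> 'a \<Rightarrow> 'a) (\<le>) (<) sup"
  shows "\<exists>x y z::'a. sup x (inf y z) \<noteq> inf (sup x y) (sup x z)"
  using assms class_lattice
  unfolding class.distrib_lattice_def class.distrib_lattice_axioms_def by blast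

lemma modlaw:
  assumes "modular_lattice TYPE('a::lattice)" "(x::'a) \<le> b"
  shows "sup x (inf a b) = inf (sup x a) b"
  using assms unfolding modular_lattice_def by blast

definition diamond :: "'a::lattice \<Rightarrow> 'a \<Rightarrow> 'a \<Rightarrow> 'a \<Rightarrow> 'a \<Rightarrow> bool" where
  "diamond p a b c q \<longleftrightarrow> inf a b = p \<and> inf a c = p \<and> inf b c = p \<and>
     sup a b = q \<and> sup a c = q \<and> sup b c = q \<and> p \<noteq> q"

lemma diamond_perm1: "diamond p a b c q \<Longrightarrow> diamond p b a c q"
  unfolding diamond_def by (simp add: inf_commute sup_commute)

lemma diamond_perm2: "diamond p a b c q \<Longrightarrow> diamond p c b a q"
  unfolding diamond_def by (simp add: inf_commute sup_commute)

lemma diamond_eqs: assumes "diamond p a b c q"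
  shows "inf a b = p" "inf a c = p" "inf b c = p" "sup a b = q" "sup a c = q" "sup b c = q" "p \<noteq> q"
  using assms by (simp_all add: diamond_def)

lemma diamond_le: assumes "diamond p a b c q"
  shows "p \<le> a" "p \<le> b" "p \<le> c" "a \<le> q" "b \<le> q" "c \<le> q" "p \<le> q"
proof -
  note e = diamond_eqs[OF assms]
  show pa: "p \<le> a" using e(1) inf_le1 by metis
  show "p \<le> b" using e(1) inf_le2 by metis
  show "p \<le> c" using e(2) inf_le2 by metis
  show aq: "a \<le> q" using e(4) sup_ge1 by metis
  show "b \<le> q" using e(4) sup_ge2 by metis
  show "c \<le> q" using e(5) sup_ge2 by metis
  show "p \<le> q" using pa aq by (rule order_trans)
qed

lemma diamond_ne: assumes "diamond p a b c q"
  shows "a \<noteq> b" "a \<noteq> c" "b \<noteq> c" "a \<noteq> p" "a \<noteq> q" "b \<noteq> p" "b \<noteq> q" "c \<noteq> p" "c \<noteq> q"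
proof -
  have gen1: "a' \<noteq> b'" if "diamond p a' b' c' q" for a' b' c'
  proof
    assume "a' = b'"
    with diamond_eqs[OF that] show False by simp
  qed
  have gen2: "a' \<noteq> p" if d: "diamond p a' b' c' q" for a' b' c'
  proof
    assume ap: "a' = p"
    note e = diamond_eqs[OF d] and l = diamond_le[OF d]
    have "b' = q" using e(4) ap l(2) by (simp add: sup.absorb2)
    then have "c' \<le> b'" using l(6) by simp
    then have "c' = p" using e(3) by (simp add: inf.absorb2)
    then show False using gen1[OF diamond_perm2[OF diamond_perm1[OF d]]] ap
      by (metis d diamond_eqs(2) inf.idem diamond_eqs(5) sup.idem diamond_eqs(7))
  qed
  have gen3: "a' \<noteq> q" if d: "diamond p a' b' c' q" for a' b' c'
  proof
    assume aq: "a' = q"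
    note e = diamond_eqs[OF d] and l = diamond_le[OF d]
    have "b' = p" using e(1) aq l(5) by (simp add: inf.absorb2)
    then have "b' \<le> c'" using l(3) by simp
    then have "c' = q" using e(6) by (simp add: sup.absorb2)
    then show False using aq e(2) e(7) by simp
  qed
  show "a \<noteq> b" by (rule gen1[OF assms])
  show "a \<noteq> c" by (rule gen1[OF diamond_perm1[OF diamond_perm2[OF diamond_perm1[OF assms]]]])
  show "b \<noteq> c" by (rule gen1[OF diamond_perm1[OF diamond_perm2[OF assms]]])
  show "a \<noteq> p" by (rule gen2[OF assms])
  show "a \<noteq> q" by (rule gen3[OF assms])
  show "b \<noteq> p" by (rule gen2[OF diamond_perm1[OF assms]])
  show "b \<noteq> q" by (rule gen3[OF diamond_perm1[OF assms]])
  show "c \<noteq> p" by (rule gen2[OF diamond_perm2[OF assms]])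
  show "c \<noteq> q" by (rule gen3[OF diamond_perm2[OF assms]])
qed

section \<open>Dedekind construction\<close>

definition "dd x y z = sup (sup (inf x y) (inf y z)) (inf z (x::'a::lattice))"
definition "uu x y z = inf (inf (sup x y) (sup y z)) (sup z (x::'a::lattice))"

lemma dd_perm: "dd x z y = dd x y z" "dd y z x = dd x y z"
  unfolding dd_def by (simp_all add: ac_simps)

lemma uu_perm: "uu x z y = uu x y z" "uu y z x = uu x y z"
  unfolding uu_def by (simp_all add: ac_simps)

context
  fixes x y z :: "'a::lattice"
  assumes M: "modular_lattice TYPE('a)"
begin

abbreviation "dd0 \<equiv> dd x y z"
abbreviation "uu0 \<equiv> uu x y z"

lemma dd_le_uu: "dd0 \<le> uu0"
  unfolding dd_def uu_def
  by (meson inf.coboundedI1 inf.coboundedI2 inf_greatest le_supI le_supI1 le_supI2 inf_le1 inf_le2 sup_ge1 sup_ge2)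

lemma meet_lemma: "inf (sup (inf x uu0) dd0) (sup (inf y uu0) dd0) = dd0"
proof -
  let ?b = "sup (inf y uu0) dd0"
  have s1: "inf (sup (inf x uu0) dd0) ?b = sup dd0 (inf (inf x uu0) ?b)"
    using modlaw[OF M, of dd0 ?b "inf x uu0"] by (simp add: sup_commute)
  have yu: "inf y uu0 = inf y (sup z x)"
    unfolding uu_def by (rule antisym) (auto simp: le_infI1 le_infI2)
  have b2: "?b = sup (inf y (sup z x)) (inf z x)"
  proof (rule antisym)
    have h1: "inf x y \<le> inf y (sup z x)" by (rule le_infI[OF inf_le2 le_supI2[OF inf_le1]])
    have h2: "inf y z \<le> inf y (sup z x)" by (rule le_infI[OF inf_le1 le_supI1[OF inf_le2]])
    show "?b \<le> sup (inf y (sup z x)) (inf z x)"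
      unfolding yu dd_def
      by (rule sup_least[OF sup_ge1 sup_least[OF sup_least[OF le_supI1[OF h1] le_supI1[OF h2]] sup_ge2]])
    show "sup (inf y (sup z x)) (inf z x) \<le> ?b"
      unfolding yu dd_def by (auto intro: le_supI2)
  qed
  have b3: "sup (inf y (sup z x)) (inf z x) = inf (sup y (inf z x)) (sup z x)"
    using modlaw[OF M, of "inf z x" "sup z x" y] by (simp add: sup_commute le_supI2)
  have s4: "inf (inf x uu0) ?b \<le> inf x (sup y (inf z x))"
    unfolding b2 b3 by (rule le_infI[OF le_infI1[OF inf_le1] le_infI2[OF inf_le1]])
  have s5: "inf x (sup y (inf z x)) = sup (inf z x) (inf y x)"
    using modlaw[OF M, of "inf z x" x y] by (simp add: inf_commute sup_commute)
  have s6: "sup (inf z x) (inf y x) \<le> dd0" unfolding dd_def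
    by (rule sup_least[OF sup_ge2 le_supI1[OF le_supI1[OF eq_refl[OF inf_commute]]]])
  have "inf (inf x uu0) ?b \<le> dd0"
    using order_trans[OF s4 s6[folded s5]] .
  then show ?thesis using s1 by (simp add: sup.absorb1)
qed

lemma join_lemma: "sup (sup (inf x uu0) dd0) (sup (inf y uu0) dd0) = uu0"
proof (rule antisym)
  have du: "dd0 \<le> uu0" by (rule dd_le_uu)
  show "sup (sup (inf x uu0) dd0) (sup (inf y uu0) dd0) \<le> uu0"
    by (rule sup_least[OF sup_least[OF inf_le2 du] sup_least[OF inf_le2 du]])
next
  have xu: "inf x uu0 = inf x (sup y z)"
    unfolding uu_def
    by (rule antisym[OF le_infI[OF inf_le1 le_infI2[OF le_infI1[OF inf_le2]]]
                        le_infI[OF inf_le1 le_infI[OF le_infI[OF le_infI1[OF sup_ge1] inf_le2] le_infI1[OF sup_ge2]]]])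
  have yu: "inf y uu0 = inf y (sup z x)"
    unfolding uu_def
    by (rule antisym[OF le_infI[OF inf_le1 le_infI2[OF inf_le2]]
                        le_infI[OF inf_le1 le_infI[OF le_infI[OF le_infI1[OF sup_ge2] le_infI1[OF sup_ge1]] inf_le2]]])
  define P where "P = sup (inf x (sup y z)) (inf y z)"
  have P1: "P = inf (sup x (inf y z)) (sup y z)"
  proof -
    have "sup (inf y z) (inf x (sup y z)) = inf (sup (inf y z) x) (sup y z)"
      by (rule modlaw[OF M]) (rule le_supI1[OF inf_le1])
    then show ?thesis unfolding P_def by (simp add: sup_commute)
  qed
  have P2: "sup P (inf y (sup z x)) = inf (sup P y) (sup z x)"
  proof -
    have "P \<le> sup z x" unfolding P1
      by (rule le_infI1[OF sup_least[OF sup_ge2 le_infI2[OF sup_ge1]]])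
    then show ?thesis using modlaw[OF M, of P "sup z x" y] by (simp add: inf_commute)
  qed
  have P3: "sup P y = inf (sup x y) (sup y z)"
  proof -
    have "sup y P = inf (sup y (sup x (inf y z))) (sup y z)"
      unfolding P1 using modlaw[OF M, of y "sup y z" "sup x (inf y z)"] by simp
    also have "sup y (sup x (inf y z)) = sup x y"
      by (metis sup_left_commute sup_inf_absorb sup_commute)
    finally show ?thesis by (simp add: sup_commute)
  qed
  have "uu0 = sup P (inf y (sup z x))" unfolding P2 P3 uu_def by simp
  also have "\<dots> \<le> sup (sup (inf x uu0) dd0) (sup (inf y uu0) dd0)"
    unfolding P_def xu yu dd_def
    by (rule sup_least[OF sup_least[OF le_supI1[OF sup_ge1] le_supI1[OF le_supI2[OF le_supI1[OF sup_ge2]]]] le_supI2[OF sup_ge1]])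
  finally show "uu0 \<le> sup (sup (inf x uu0) dd0) (sup (inf y uu0) dd0)" .
qed

lemma dd_ne_uu:
  assumes "sup x (inf y z) \<noteq> inf (sup x y) (sup x z)"
  shows "dd0 \<noteq> uu0"
proof
  assume eq: "dd0 = uu0"
  have "sup x dd0 = sup x (inf y z)"
    unfolding dd_def
    by (rule antisym[OF sup_least[OF sup_ge1 sup_least[OF sup_least[OF le_supI1[OF inf_le1] sup_ge2] le_supI1[OF inf_le2]]]
                        sup_least[OF sup_ge1 le_supI2[OF le_supI1[OF sup_ge2]]]])
  moreover have "sup x uu0 = inf (sup x y) (sup x z)"
  proof -
    let ?B = "inf (sup x y) (sup x z)"
    have "uu0 = inf (sup y z) ?B" unfolding uu_def
      by (simp add: inf_commute inf_left_commute sup_commute)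
    moreover have "sup x (inf (sup y z) ?B) = inf (sup x (sup y z)) ?B"
      by (rule modlaw[OF M]) simp
    moreover have "inf (sup x (sup y z)) ?B = ?B"
      by (rule inf.absorb2[OF le_infI1[OF sup_mono[OF order_refl sup_ge1]]])
    ultimately show ?thesis by simp
  qed
  ultimately show False using assms eq by simp
qed

end

lemma exists_diamond:
  assumes M: "modular_lattice TYPE('a::lattice)"
    and nd: "\<not> class.distrib_lattice (inf :: 'a \<Rightarrow> 'a \<Rightarrow> 'a) (\<le>) (<) sup"
  shows "\<exists>p a b c q::'a. diamond p a b c q"
proof -
  obtain x y z :: 'a where xyz: "sup x (inf y z) \<noteq> inf (sup x y) (sup x z)"
    using not_distrib_witness[OF nd] by blast
  let ?d = "dd x y z" and ?u = "uu x y z"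
  let ?a = "sup (inf x ?u) ?d" and ?b = "sup (inf y ?u) ?d" and ?c = "sup (inf z ?u) ?d"
  have P: "dd x z y = dd x y z" "dd y z x = dd x y z" "uu x z y = uu x y z" "uu y z x = uu x y z"
    by (simp_all add: dd_def uu_def ac_simps)
  have "diamond ?d ?a ?b ?c ?u"
    unfolding diamond_def
    using meet_lemma[OF M, of x y z] meet_lemma[OF M, of x z y, unfolded P]
      meet_lemma[OF M, of y z x, unfolded P]
      join_lemma[OF M, of x y z] join_lemma[OF M, of x z y, unfolded P]
      join_lemma[OF M, of y z x, unfolded P]
      dd_ne_uu[OF M xyz]
    by simp
  then show ?thesis by blast
qed


lemma shrink_low:
  assumes M: "modular_lattice TYPE('a::lattice)" and d: "diamond p a b c (q::'a)"
    and px: "p < x" and xa: "x < a"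
  shows "diamond p x (inf (sup x c) b) (inf (sup x b) c) (inf (sup x c) (sup x b))
         \<and> inf (sup x c) (sup x b) < q"
proof -
  note e = diamond_eqs[OF d] and l = diamond_le[OF d]
  let ?y = "inf (sup x c) b" and ?z = "inf (sup x b) c" and ?q = "inf (sup x c) (sup x b)"
  have xa': "x \<le> a" using xa by simp
  have px': "p \<le> x" using px by simp
  have py: "p \<le> ?y" by (rule le_infI[OF le_supI1[OF px'] l(2)])
  have pz: "p \<le> ?z" by (rule le_infI[OF le_supI1[OF px'] l(3)])
  have xy: "inf x ?y = p"
    by (rule antisym[OF order_trans[OF inf_mono[OF xa' inf_le2] eq_refl[OF e(1)]] le_infI[OF px' py]])
  have xz: "inf x ?z = p"
    by (rule antisym[OF order_trans[OF inf_mono[OF xa' inf_le2] eq_refl[OF e(2)]] le_infI[OF px' pz]])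
  have yz: "inf ?y ?z = p"
    by (rule antisym[OF order_trans[OF inf_mono[OF inf_le2 inf_le2] eq_refl[OF e(3)]] le_infI[OF py pz]])
  have xy': "sup x ?y = ?q"
    using modlaw[OF M, of x "sup x c" b] by (simp add: inf_commute)
  have xz': "sup x ?z = ?q"
    using modlaw[OF M, of x "sup x b" c] by (simp add: inf_commute)
  have xcq: "sup x c \<le> q" by (rule sup_least[OF order_trans[OF xa' l(4)] l(6)])
  have yc: "sup ?y c = sup x c"
  proof -
    have "sup c (inf b (sup x c)) = inf (sup c b) (sup x c)"
      by (rule modlaw[OF M]) (rule sup_ge2)
    also have "\<dots> = sup x c" using e(6) xcq by (simp add: sup_commute inf.absorb2)
    finally show ?thesis by (simp add: sup_commute inf_commute)
  qed
  have yz': "sup ?y ?z = ?q"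
  proof -
    have "sup ?y (inf c (sup x b)) = inf (sup ?y c) (sup x b)"
      by (rule modlaw[OF M]) (rule le_infI2[OF le_supI2[OF order_refl]])
    then show ?thesis using yc by (simp add: inf_commute)
  qed
  have pq: "p \<noteq> ?q"
  proof
    assume "p = ?q"
    then have "x \<le> p" by (metis le_infI sup_ge1)
    then show False using px by simp
  qed
  have xbq: "sup x b \<noteq> q"
  proof
    assume h: "sup x b = q"
    have m: "sup x (inf b a) = inf (sup x b) a" by (rule modlaw[OF M xa'])
    have m1: "sup x (inf b a) = x" using e(1) px' by (simp add: inf_commute sup.absorb1)
    have m2: "inf (sup x b) a = a" using h l(4) by (simp add: inf.absorb2)
    have "x = a" using m m1 m2 by simp
    then show False using xa by simp
  qed
  have "?q < q"
  proof -
    have "sup x b \<le> q" by (rule sup_least[OF order_trans[OF xa' l(4)] l(5)])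
    from le_neq_trans[OF this xbq] have "sup x b < q" .
    then show ?thesis by (rule le_less_trans[OF inf_le2])
  qed
  then show ?thesis unfolding diamond_def using xy xz yz xy' xz' yz' pq by simp
qed

lemma shrink_high:
  assumes M: "modular_lattice TYPE('a::lattice)" and d: "diamond p a b c (q::'a)"
    and ax: "a < x" and xq: "x < q"
  shows "diamond (sup (inf x c) (inf x b)) x (sup (inf x c) b) (sup (inf x b) c) q
         \<and> p < sup (inf x c) (inf x b)"
proof -
  note e = diamond_eqs[OF d] and l = diamond_le[OF d]
  let ?y = "sup (inf x c) b" and ?z = "sup (inf x b) c" and ?p = "sup (inf x c) (inf x b)"
  have ax': "a \<le> x" using ax by simp
  have xq': "x \<le> q" using xq by simp
  have yq: "?y \<le> q" by (rule sup_least[OF le_infI1[OF xq'] l(5)])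
  have zq: "?z \<le> q" by (rule sup_least[OF le_infI1[OF xq'] l(6)])
  have xy: "sup x ?y = q"
    by (rule antisym[OF sup_least[OF xq' yq] order_trans[OF eq_refl[OF e(4)[symmetric]] sup_mono[OF ax' sup_ge2]]])
  have xz: "sup x ?z = q"
    by (rule antisym[OF sup_least[OF xq' zq] order_trans[OF eq_refl[OF e(5)[symmetric]] sup_mono[OF ax' sup_ge2]]])
  have yz: "sup ?y ?z = q"
    by (rule antisym[OF sup_least[OF yq zq] order_trans[OF eq_refl[OF e(6)[symmetric]] sup_mono[OF sup_ge2 sup_ge2]]])
  have xy': "inf x ?y = ?p"
    using modlaw[OF M, of "inf x c" x b] by (simp add: inf_commute)
  have xz': "inf x ?z = ?p"
    using modlaw[OF M, of "inf x b" x c] by (simp add: inf_commute sup_commute)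
  have pxc: "p \<le> inf x c" by (rule le_infI[OF order_trans[OF l(1) ax'] l(3)])
  have cy: "inf c ?y = inf x c"
  proof -
    have "sup (inf x c) (inf b c) = inf (sup (inf x c) b) c"
      by (rule modlaw[OF M]) (rule inf_le2)
    then show ?thesis using e(3) pxc by (simp add: inf_commute sup.absorb1)
  qed
  have yz': "inf ?y ?z = ?p"
  proof -
    have "sup (inf x b) (inf c ?y) = inf (sup (inf x b) c) ?y"
      by (rule modlaw[OF M]) (rule le_supI2[OF inf_le2])
    then show ?thesis using cy by (simp add: inf_commute sup_commute)
  qed
  have pq: "?p \<noteq> q"
  proof
    assume "?p = q"
    then have "q \<le> x" by (metis inf_le1 sup_least)
    then show False using xq by simp
  qed
  have "p < ?p"
  proof -
    have le: "p \<le> ?p" by (rule le_supI1[OF pxc])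
    have "?p \<noteq> p"
    proof
      assume h: "?p = p"
      then have "inf x c \<le> p" by (metis sup_ge1)
      then have xc: "inf x c = p" using pxc by simp
      have m: "sup a (inf c x) = inf (sup a c) x" by (rule modlaw[OF M ax'])
      have m1: "sup a (inf c x) = a" using xc l(1) by (simp add: inf_commute sup.absorb1)
      have m2: "inf (sup a c) x = x" using e(5) xq' by (simp add: inf.absorb2)
      have "a = x" using m m1 m2 by simp
      then show False using ax by simp
    qed
    with le show ?thesis by simp
  qed
  then show ?thesis unfolding diamond_def using xy xz yz xy' xz' yz' pq by simp
qed

definition ivl :: "'a::lattice \<Rightarrow> 'a \<Rightarrow> 'a set" where "ivl p q = {z. p \<le> z \<and> z \<le> q}"

lemma covering_diamond:
  assumes M: "modular_lattice TYPE('a::{finite,lattice})"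
    and ex: "\<exists>p a b c q::'a. diamond p a b c q"
  shows "\<exists>p a b c q::'a. diamond p a b c q \<and>
     (\<forall>m\<in>{a,b,c}. \<forall>x. \<not> (p < x \<and> x < m) \<and> \<not> (m < x \<and> x < q))"
proof -
  define P where "P n \<longleftrightarrow> (\<exists>p a b c q::'a. diamond p a b c q \<and> card (ivl p q) = n)" for n
  from ex obtain n0 where "P n0" unfolding P_def by blast
  define n where "n = (LEAST n. P n)"
  have Pn: "P n" unfolding n_def by (rule LeastI) (rule \<open>P n0\<close>)
  have minn: "\<And>m. m < n \<Longrightarrow> \<not> P m" unfolding n_def by (rule not_less_Least)
  obtain p a b c q :: 'a where d: "diamond p a b c q" and cn: "card (ivl p q) = n"
    using Pn unfolding P_def by blast
  have low: "\<not> (p < x \<and> x < a')" if d': "diamond p a' b' c' q" for a' b' c' x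
  proof
    assume h: "p < x \<and> x < a'"
    from shrink_low[OF M d'] h obtain y z q' where
      d2: "diamond p x y z q'" and q'q: "q' < q" by blast
    have sub: "ivl p q' \<subseteq> ivl p q"
      using q'q unfolding ivl_def by (auto intro: order_trans less_imp_le)
    have "q \<in> ivl p q - ivl p q'"
      using q'q diamond_le[OF d'] unfolding ivl_def by auto
    then have "ivl p q' \<subset> ivl p q" using sub by blast
    from psubset_card_mono[OF finite this] have "card (ivl p q') < n" using cn by simp
    moreover have "P (card (ivl p q'))" unfolding P_def using d2 by blast
    ultimately show False using minn by blast
  qed
  have high: "\<not> (a' < x \<and> x < q)" if d': "diamond p a' b' c' q" for a' b' c' x
  proof
    assume h: "a' < x \<and> x < q"
    from shrink_high[OF M d'] h obtain y z p' where
      d2: "diamond p' x y z q" and pp': "p < p'" by blast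
    have sub: "ivl p' q \<subseteq> ivl p q"
      using pp' unfolding ivl_def by (auto intro: order_trans less_imp_le)
    have "p \<in> ivl p q - ivl p' q"
      using pp' diamond_le[OF d'] unfolding ivl_def by auto
    then have "ivl p' q \<subset> ivl p q" using sub by blast
    from psubset_card_mono[OF finite this] have "card (ivl p' q) < n" using cn by simp
    moreover have "P (card (ivl p' q))" unfolding P_def using d2 by blast
    ultimately show False using minn by blast
  qed
  have "\<forall>m\<in>{a,b,c}. \<forall>x. \<not> (p < x \<and> x < m) \<and> \<not> (m < x \<and> x < q)"
    using low[OF d] high[OF d] low[OF diamond_perm1[OF d]] high[OF diamond_perm1[OF d]]
      low[OF diamond_perm2[OF d]] high[OF diamond_perm2[OF d]] by blast
  with d show ?thesis by blast
qed

lemma middle_one: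
  fixes p q m e :: "'a::lattice"
  assumes below: "\<forall>x. \<not> (p < x \<and> x < m)" and above: "\<forall>x. \<not> (m < x \<and> x < q)"
    and pm: "p \<le> m" and mq: "m \<le> q" and pe: "p < e" and eq: "e < q" and em: "e \<noteq> m"
  shows "inf e m = p \<and> sup e m = q"
proof
  have p1: "p \<le> inf e m" using pe pm by simp
  show "inf e m = p"
  proof (cases "inf e m = m")
    case True
    then have "m \<le> e" by (metis inf.cobounded1)
    then have "m < e" using em by simp
    then show ?thesis using above eq by blast
  next
    case False
    then have "inf e m < m" by (rule le_neq_trans[OF inf_le2])
    then show ?thesis using below p1 by (metis order.not_eq_order_implies_strict)
  qed
  have q1: "sup e m \<le> q" using eq mq by simp
  show "sup e m = q"
  proof (cases "sup e m = m")
    case True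
    then have "e \<le> m" by (metis sup.cobounded1)
    then have "e < m" using em by simp
    then show ?thesis using below pe by blast
  next
    case False
    then have "m < sup e m" by (rule le_neq_trans[OF sup_ge2 not_sym])
    then show ?thesis using above q1 by (metis order.not_eq_order_implies_strict)
  qed
qed

lemma lattice_part:
  assumes M: "modular_lattice TYPE('a::{finite,lattice})"
    and nd: "\<not> class.distrib_lattice (inf :: 'a \<Rightarrow> 'a \<Rightarrow> 'a) (\<le>) (<) sup"
  shows "\<exists>p a b c q::'a. diamond p a b c q \<and>
     (\<forall>e. p < e \<and> e < q \<longrightarrow> (\<exists>u v. u \<noteq> v \<and> inf e u = p \<and> sup e u = q \<and> inf e v = p \<and> sup e v = q))"
proof -
  obtain p a b c q :: 'a where d: "diamond p a b c q" and
    cov: "\<forall>m\<in>{a,b,c}. \<forall>x. \<not> (p < x \<and> x < m) \<and> \<not> (m < x \<and> x < q)"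
    using covering_diamond[OF M exists_diamond[OF M nd]] by blast
  note e = diamond_eqs[OF d] and l = diamond_le[OF d] and ne = diamond_ne[OF d]
  have "\<exists>u v. u \<noteq> v \<and> inf t u = p \<and> sup t u = q \<and> inf t v = p \<and> sup t v = q"
    if pt: "p < t" and tq: "t < q" for t
  proof (cases "t = a \<or> t = b \<or> t = c")
    case True
    then show ?thesis
    proof (elim disjE)
      assume "t = a" then show ?thesis using e ne by blast
    next
      assume "t = b" then show ?thesis using e ne by (metis inf_commute sup_commute)
    next
      assume "t = c" then show ?thesis using e ne by (metis inf_commute sup_commute)
    qed
  next
    case False
    have A: "inf t a = p \<and> sup t a = q"
      by (rule middle_one) (use cov l pt tq False in auto)
    have B: "inf t b = p \<and> sup t b = q"
      by (rule middle_one) (use cov l pt tq False in auto)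
    show ?thesis using A B ne(1) by blast
  qed
  with d show ?thesis by blast
qed


definition vars :: "('a,'k::comm_ring_1) mpoly set \<Rightarrow> 'a set" where
  "vars I = {u. Var u \<in> I}"

lemma vars_gI: "vars (gI S :: ('a::lattice,'k::field) mpoly set) = S"
  unfolding vars_def using Var_in_gI_iff by blast

lemma ideal_mult_gen:
  assumes J: "is_ideal J" and B: "\<And>t. t \<in> B \<Longrightarrow> r * t \<in> J" and x: "x \<in> ideal_gen B"
  shows "r * x \<in> J"
proof -
  from x obtain T c where T: "finite T" "T \<subseteq> B" "x = (\<Sum>t\<in>T. c t * t)"
    unfolding ideal_gen_def by blast
  have "r * x = (\<Sum>t\<in>T. c t * (r * t))" by (simp add: T sum_distrib_left ac_simps)
  also have "\<dots> \<in> J" by (rule is_ideal_sum[OF J]) (use T B is_ideal_mult[OF J] in blast)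
  finally show ?thesis .
qed

lemma E_eq_iff [simp]: "E u = E v \<longleftrightarrow> u = v"
proof
  assume "E u = E v"
  then have "Poly_Mapping.lookup (E u) u = Poly_Mapping.lookup (E v) u" by simp
  then show "u = v" by (simp add: lookup_single when_def split: if_splits)
qed simp

lemma one_neq_zero_field: "(1::'k::field) \<noteq> 0" by simp

lemma Cpq_blocks:
  assumes "(Var s * Var t :: ('a::lattice,'k::field) mpoly) \<in> gI S"
  shows "\<exists>w\<in>S. inf s t \<le> w \<and> w \<le> sup s t"
proof (rule ccontr)
  assume "\<not> ?thesis"
  then have "kills (Cpq (inf s t) (sup s t)) (I_L \<union> Var ` S :: ('a,'k) mpoly set)"
    by (intro kills_Un kills_Cpq_I_L kills_Cpq_Var) auto
  from kills_mem[OF this assms] show False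
    by (simp add: Var_mult psi_single Cpq_pair)
qed

lemma Cpq_blocks2:
  assumes "(Var s * Var t - Var s' * Var t' :: ('a::lattice,'k::field) mpoly) \<in> gI S"
    and "\<not> (inf s' t' = inf s t \<and> sup s' t' = sup s t)"
  shows "\<exists>w\<in>S. inf s t \<le> w \<and> w \<le> sup s t"
proof (rule ccontr)
  assume "\<not> ?thesis"
  then have "kills (Cpq (inf s t) (sup s t)) (I_L \<union> Var ` S :: ('a,'k) mpoly set)"
    by (intro kills_Un kills_Cpq_I_L kills_Cpq_Var) auto
  from kills_mem[OF this assms(1)] assms(2) show False
    by (simp add: Var_mult psi_single Cpq_pair psi_diff)
qed

lemma kappa_block:
  assumes "(Var u - Var v :: ('a::lattice,'k::field) mpoly) \<in> gI S" "u \<noteq> v"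
  shows "u \<in> S"
proof (rule ccontr)
  assume "u \<notin> S"
  then have "kills {E u} (I_L \<union> Var ` S :: ('a,'k) mpoly set)"
    by (intro kills_Un kills_E_I_L kills_E_Var)
  from kills_mem[OF this assms(1)] assms(2) show False
    by (simp add: psi_sing lookup_Var lookup_minus)
qed

lemma lin_part:
  fixes f :: "('a::lattice,'k::field) mpoly"
  assumes g: "g \<in> ideal_gen (gI S \<union> {f})" and f0: "Poly_Mapping.lookup f 0 = 0"
  shows "\<exists>l. \<forall>u. u \<notin> S \<longrightarrow> Poly_Mapping.lookup g (E u) = l * Poly_Mapping.lookup f (E u)"
proof -
  from g obtain T c where T: "finite T" "T \<subseteq> gI S \<union> {f}" "g = (\<Sum>t\<in>T. c t * t)"
    unfolding ideal_gen_def by blast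
  define l where "l = (if f \<in> T - gI S then Poly_Mapping.lookup (c f) 0 else 0)"
  have "Poly_Mapping.lookup g (E u) = l * Poly_Mapping.lookup f (E u)" if u: "u \<notin> S" for u
  proof -
    have K: "kills {E u} (gI S :: ('a,'k) mpoly set)"
      by (intro kills_ideal_gen kills_Un kills_E_I_L kills_E_Var u)
    have z: "psi {E u} (c t * t) = 0" if "t \<in> gI S" for t
      using K that unfolding kills_def by blast
    have "Poly_Mapping.lookup g (E u) = psi {E u} g" by (simp add: psi_sing)
    also have "\<dots> = (\<Sum>t\<in>T. psi {E u} (c t * t))" by (simp add: T psi_sum)
    also have "\<dots> = (\<Sum>t\<in>T - gI S. psi {E u} (c t * t))"
      by (rule sum.mono_neutral_right) (use T z in auto)
    also have "\<dots> = l * Poly_Mapping.lookup f (E u)"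
    proof (cases "f \<in> T - gI S")
      case True
      then have "T - gI S = {f}" using T by auto
      then show ?thesis using True f0 by (simp add: l_def psi_sing lookup_mult_E)
    next
      case False
      then have e: "T - gI S = {}" using T by auto
      show ?thesis unfolding e using False by (auto simp: l_def)
    qed
    finally show ?thesis .
  qed
  then show ?thesis by blast
qed


lemma diamond_incomp:
  fixes x y :: "'a::lattice"
  assumes "inf x y = p" "sup x y = q" "x \<noteq> p" "x \<noteq> q"
  shows "\<not> x \<le> y" "\<not> y \<le> x"
proof -
  show "\<not> x \<le> y"
  proof
    assume "x \<le> y" then have "inf x y = x" by (simp add: inf_absorb1)
    then show False using assms by simp
  qed
  show "\<not> y \<le> x"
  proof
    assume "y \<le> x" then have "sup x y = x" by (simp add: sup_absorb1)
    then show False using assms by simp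
  qed
qed

lemma filtration_implies_distrib:
  assumes M: "modular_lattice TYPE('a::{finite, lattice})"
    and F: "combinatorial_koszul_filtration_H (F :: ('a, 'k::field) mpoly set set)"
  shows "class.distrib_lattice (inf :: 'a \<Rightarrow> 'a \<Rightarrow> 'a) (\<le>) (<) sup"
proof (rule ccontr)
  assume nd: "\<not> ?thesis"
  obtain p a b c q :: 'a where d: "diamond p a b c q" and
    mid: "\<forall>e. p < e \<and> e < q \<longrightarrow> (\<exists>u v. u \<noteq> v \<and> inf e u = p \<and> sup e u = q \<and> inf e v = p \<and> sup e v = q)"
    using lattice_part[OF M nd] by blast
  note de = diamond_eqs[OF d] and dl = diamond_le[OF d] and dn = diamond_ne[OF d]
  define D where "D = {z. p \<le> z \<and> z \<le> q}"
  have kf: "koszul_filtration_H F" and comb: "\<forall>I\<in>F. \<exists>S. I = gI S"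
    using F unfolding combinatorial_koszul_filtration_H_def by auto
  have varsF: "I = gI (vars I)" if "I \<in> F" for I
    using comb that vars_gI by metis
  have mF: "gI UNIV \<in> F" using kf unfolding koszul_filtration_H_def by simp
  have step: "\<And>I. I \<in> F \<Longrightarrow> I \<noteq> I_L \<Longrightarrow>
        (\<exists>J\<in>F. J \<subset> I \<and> (\<exists>f. I = ideal_gen (J \<union> {f})) \<and> colon J I \<in> F)"
    using kf unfolding koszul_filtration_H_def by blast
  define P where "P n \<longleftrightarrow> (\<exists>I\<in>F. vars I \<inter> D \<noteq> {} \<and> card (vars I) = n)" for n
  have "P (card (vars (gI UNIV :: ('a,'k) mpoly set)))"
    unfolding P_def
  proof (rule bexI[OF _ mF])
    have "p \<in> vars (gI UNIV :: ('a,'k) mpoly set) \<inter> D" using dl(7) by (simp add: vars_gI D_def)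
    then show "vars (gI UNIV :: ('a,'k) mpoly set) \<inter> D \<noteq> {} \<and>
        card (vars (gI UNIV :: ('a,'k) mpoly set)) = card (vars (gI UNIV :: ('a,'k) mpoly set))" by blast
  qed
  define n where "n = (LEAST n. P n)"
  have Pn: "P n" unfolding n_def by (rule LeastI) fact
  have minn: "\<And>m. m < n \<Longrightarrow> \<not> P m" unfolding n_def by (rule not_less_Least)
  obtain I where IF: "I \<in> F" and Itouch: "vars I \<inter> D \<noteq> {}" and In: "card (vars I) = n"
    using Pn unfolding P_def by blast
  have IL: "I \<noteq> I_L"
  proof
    assume "I = I_L"
    then have "vars I = {}" using vars_gI[of "{}"] gI_empty by metis
    with Itouch show False by simp
  qed
  obtain J f where JF: "J \<in> F" and JI: "J \<subset> I" and If: "I = ideal_gen (J \<union> {f})"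
      and CF: "colon J I \<in> F"
    using step[OF IF IL] by blast
  define SJ where "SJ = vars J"
  define SI where "SI = vars I"
  have Jg: "J = gI SJ" unfolding SJ_def by (rule varsF[OF JF])
  have Ig: "I = gI SI" unfolding SI_def by (rule varsF[OF IF])
  have SJI: "SJ \<subseteq> SI" using JI unfolding SJ_def SI_def vars_def by auto
  have SJne: "SJ \<noteq> SI" using JI Jg Ig by auto
  have "card SJ < card SI" using SJI SJne by (simp add: psubset_card_mono)
  then have "\<not> P (card SJ)" using minn In SI_def by simp
  then have SJD: "SJ \<inter> D = {}" unfolding P_def SJ_def using JF by blast
  obtain e where eSI: "e \<in> SI" and eD: "e \<in> D" using Itouch SI_def by blast
  have eSJ: "e \<notin> SJ" using eD SJD by blast
  have Jideal: "is_ideal J" using Jg by (simp add: ideal_gen_is_ideal)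
  have ILJ: "I_L \<subseteq> J" using Jg by (simp add: I_L_sub_gI)
  have fI: "f \<in> I" using If ideal_gen_mem by blast
  have f0: "Poly_Mapping.lookup f 0 = 0"
  proof -
    have "kills {0} (I_L \<union> Var ` SI :: ('a,'k) mpoly set)"
      by (intro kills_Un kills_0_I_L kills_0_Var)
    from kills_mem[OF this] fI Ig show ?thesis by (simp add: psi_sing)
  qed
  have lin: "\<exists>l. \<forall>u. u \<notin> SJ \<longrightarrow> Poly_Mapping.lookup g (E u) = l * Poly_Mapping.lookup f (E u)"
    if "g \<in> I" for g
    using lin_part[OF _ f0] that If Jg by blast
  have vI: "t \<in> SJ \<or> t = e" if tSI: "t \<in> SI" for t
  proof (rule ccontr)
    assume "\<not> (t \<in> SJ \<or> t = e)"
    then have tSJ: "t \<notin> SJ" and te: "t \<noteq> e" by auto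
    have VeI: "Var e \<in> I" using eSI Ig Var_in_gI by blast
    have VtI: "Var t \<in> I" using tSI Ig Var_in_gI by blast
    obtain l1 where l1: "\<forall>u. u \<notin> SJ \<longrightarrow> Poly_Mapping.lookup (Var e :: ('a,'k) mpoly) (E u) = l1 * Poly_Mapping.lookup f (E u)"
      using lin[OF VeI] by blast
    obtain l2 where l2: "\<forall>u. u \<notin> SJ \<longrightarrow> Poly_Mapping.lookup (Var t :: ('a,'k) mpoly) (E u) = l2 * Poly_Mapping.lookup f (E u)"
      using lin[OF VtI] by blast
    have "1 = l1 * Poly_Mapping.lookup f (E e)" using l1[rule_format, OF eSJ] by (simp add: lookup_Var)
    moreover have "0 = l1 * Poly_Mapping.lookup f (E t)" using l1[rule_format, OF tSJ] te by (simp add: lookup_Var)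
    moreover have "1 = l2 * Poly_Mapping.lookup f (E t)" using l2[rule_format, OF tSJ] by (simp add: lookup_Var)
    ultimately show False by (metis mult_eq_0_iff zero_neq_one)
  qed
  have colon_char: "r \<in> colon J I" if rJ: "r * Var e \<in> J" for r
    unfolding colon_def
  proof (rule CollectI, rule ballI)
    fix x assume "x \<in> I"
    then have "x \<in> ideal_gen (I_L \<union> Var ` SI)" using Ig by simp
    then show "r * x \<in> J"
    proof (rule ideal_mult_gen[OF Jideal, rotated])
      fix t :: "('a,'k) mpoly" assume "t \<in> I_L \<union> Var ` SI"
      then show "r * t \<in> J"
      proof
        assume "t \<in> I_L" then show ?thesis using ILJ is_ideal_mult[OF Jideal] by blast
      next
        assume "t \<in> Var ` SI"
        then obtain s where s: "s \<in> SI" "t = Var s" by blast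
        show ?thesis
        proof (cases "s = e")
          case True then show ?thesis using rJ s by simp
        next
          case False
          then have "s \<in> SJ" using vI s by blast
          then have "Var s \<in> J" using Jg Var_in_gI by blast
          then show ?thesis using s is_ideal_mult[OF Jideal] by blast
        qed
      qed
    qed
  qed
  define T where "T = vars (colon J I)"
  have Cg: "colon J I = gI T" unfolding T_def by (rule varsF[OF CF])
  have colT: "Var t * Var e \<in> J" if "t \<in> T" for t
  proof -
    have "Var t \<in> colon J I" using that Cg Var_in_gI by blast
    moreover have "Var e \<in> I" using eSI Ig Var_in_gI by blast
    ultimately show ?thesis unfolding colon_def by blast
  qed
  have inC: "r \<in> gI T" if "r * Var e \<in> J" for r
    using colon_char[OF that] Cg by simp
  have blockJ: "\<exists>w\<in>SJ. inf s t \<le> w \<and> w \<le> sup s t" if "Var s * Var t \<in> J" for s t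
    using Cpq_blocks[of s t SJ] that Jg by simp
  have ac_inc: "\<not> a \<le> c" "\<not> c \<le> a" "\<not> b \<le> c" "\<not> c \<le> b"
    using diamond_incomp[OF de(2) de(5) dn(4) dn(5)] diamond_incomp[OF de(3) de(6) dn(6) dn(7)]
    by auto
  have key: "Var p * Var q * (Var a - Var b) \<in> J"
  proof -
    have "Var p * Var q * (Var a - Var b) =
          Var b * basic_binomial a c - Var a * (basic_binomial b c :: ('a,'k) mpoly)"
      unfolding basic_binomial_def using de by (simp add: algebra_simps)
    also have "\<dots> \<in> I_L"
      using basic_binomial_in_I_L[OF ac_inc(1,2)] basic_binomial_in_I_L[OF ac_inc(3,4)]
      by (intro is_ideal_diff[OF I_L_is_ideal] is_ideal_mult[OF I_L_is_ideal])
    finally show ?thesis using ILJ by blast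
  qed
  show False
  proof (cases "e = p")
    case True
    have "(Var q * Var a - Var q * Var b) * Var e = (Var p * Var q * (Var a - Var b) :: ('a,'k) mpoly)"
      using True by (simp add: algebra_simps)
    then have "(Var q * Var a - Var q * Var b) * Var e \<in> J" using key by simp
    then have "(Var q * Var a - Var q * Var b :: ('a,'k) mpoly) \<in> gI T" by (rule inC)
    moreover have qb: "inf q b = b" "inf q a = a" "sup q a = q"
      using dl by (simp_all add: inf_absorb2 sup_absorb1)
    then have "\<not> (inf q b = inf q a \<and> sup q b = sup q a)" using dn(1) by simp
    ultimately obtain w where w: "w \<in> T" "inf q a \<le> w" "w \<le> sup q a"
      using Cpq_blocks2[of q a q b T] by blast
    have aw: "a \<le> w" and wq: "w \<le> q" using w qb by simp_all
    have pw: "p \<le> w" using dl(1) aw by (rule order_trans)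
    from blockJ[OF colT[OF w(1)]] obtain w' where w': "w' \<in> SJ" "inf w e \<le> w'" "w' \<le> sup w e"
      by blast
    have "inf w e = p" "sup w e = w" using True pw by (simp_all add: inf_absorb2 sup_absorb1)
    then have "w' \<in> SJ \<inter> D" unfolding D_def using w' wq order_trans by auto
    then show False using SJD by blast
  next
    case False
    show False
    proof (cases "e = q")
      case True
      have "(Var p * Var a - Var p * Var b) * Var e = (Var p * Var q * (Var a - Var b) :: ('a,'k) mpoly)"
        using True by (simp add: algebra_simps)
      then have "(Var p * Var a - Var p * Var b) * Var e \<in> J" using key by simp
      then have "(Var p * Var a - Var p * Var b :: ('a,'k) mpoly) \<in> gI T" by (rule inC)
      moreover have pb: "inf p b = p" "inf p a = p" "sup p a = a" "sup p b = b"
        using dl by (simp_all add: inf_absorb1 sup_absorb2)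
      then have "\<not> (inf p b = inf p a \<and> sup p b = sup p a)" using dn(1) by simp
      ultimately obtain w where w: "w \<in> T" "inf p a \<le> w" "w \<le> sup p a"
        using Cpq_blocks2[of p a p b T] by blast
      have pw: "p \<le> w" and wa: "w \<le> a" using w pb by simp_all
      have wq: "w \<le> q" using wa dl(4) by (rule order_trans)
      from blockJ[OF colT[OF w(1)]] obtain w' where w': "w' \<in> SJ" "inf w e \<le> w'" "w' \<le> sup w e"
        by blast
      have "inf w e = w" "sup w e = q" using True wq by (simp_all add: inf_absorb1 sup_absorb2)
      then have "w' \<in> SJ \<inter> D" unfolding D_def using w' pw order_trans by auto
      then show False using SJD by blast
    next
      case False2: False
      have pe: "p < e" "e < q" using eD \<open>e \<noteq> p\<close> False2 unfolding D_def by auto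
      obtain u v where uv: "u \<noteq> v" "inf e u = p" "sup e u = q" "inf e v = p" "sup e v = q"
        using mid pe by blast
      have ep: "e \<noteq> p" "e \<noteq> q" using pe by auto
      have inc: "\<not> e \<le> u" "\<not> u \<le> e" "\<not> e \<le> v" "\<not> v \<le> e"
        using diamond_incomp[OF uv(2,3) ep] diamond_incomp[OF uv(4,5) ep] by auto
      have "(Var u - Var v) * Var e = basic_binomial e u - (basic_binomial e v :: ('a,'k) mpoly)"
        unfolding basic_binomial_def using uv by (simp add: algebra_simps)
      also have "\<dots> \<in> I_L"
        using basic_binomial_in_I_L[OF inc(1,2)] basic_binomial_in_I_L[OF inc(3,4)]
        by (intro is_ideal_diff[OF I_L_is_ideal])
      finally have "(Var u - Var v :: ('a,'k) mpoly) \<in> gI T" using ILJ by (intro inC) blast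
      then have "u \<in> T" using kappa_block uv(1) by blast
      from blockJ[OF colT[OF this]] obtain w' where "w' \<in> SJ" "inf u e \<le> w'" "w' \<le> sup u e" by blast
      moreover have "inf u e = p" "sup u e = q" using uv by (simp_all add: inf_commute sup_commute)
      ultimately have "w' \<in> SJ \<inter> D" unfolding D_def by auto
      then show False using SJD by blast
    qed
  qed
qed


definition mv :: "('a::lattice \<Rightarrow>\<^sub>0 nat) \<Rightarrow> ('a \<Rightarrow>\<^sub>0 nat) \<Rightarrow> bool" where
  "mv m m' \<longleftrightarrow> (\<exists>w u v. \<not> u \<le> v \<and> \<not> v \<le> u \<and> m = w + E u + E v \<and> m' = w + E (sup u v) + E (inf u v))"

definition eqv :: "('a::lattice \<Rightarrow>\<^sub>0 nat) \<Rightarrow> ('a \<Rightarrow>\<^sub>0 nat) \<Rightarrow> bool" where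
  "eqv = (\<lambda>m m'. mv m m' \<or> mv m' m)\<^sup>*\<^sup>*"

lemma eqv_refl [simp]: "eqv m m"
  by (simp add: eqv_def)

lemma eqv_sym: "eqv m m' \<Longrightarrow> eqv m' m"
  unfolding eqv_def
proof (induction rule: rtranclp_induct)
  case (step y z)
  have "(\<lambda>m m'. mv m m' \<or> mv m' m) z y" using step(2) by blast
  from converse_rtranclp_into_rtranclp[OF this step.IH] show ?case .
qed simp

lemma eqv_trans: "eqv m m' \<Longrightarrow> eqv m' m'' \<Longrightarrow> eqv m m''"
  unfolding eqv_def by (rule rtranclp_trans)

lemma mv_eqv: "mv m m' \<Longrightarrow> eqv m m'"
  unfolding eqv_def by auto

lemma mv_add: "mv m m' \<Longrightarrow> mv (w + m) (w + m')"
proof -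
  assume "mv m m'"
  then obtain w' u v where h: "\<not> u \<le> v" "\<not> v \<le> u" "m = w' + E u + E v" "m' = w' + E (sup u v) + E (inf u v)"
    unfolding mv_def by blast
  show ?thesis unfolding mv_def
    by (rule exI[of _ "w + w'"], rule exI[of _ u], rule exI[of _ v]) (simp add: h add.assoc)
qed

lemma eqv_add: "eqv m m' \<Longrightarrow> eqv (w + m) (w + m')"
  unfolding eqv_def
proof (induction rule: rtranclp_induct)
  case (step y z)
  have "(\<lambda>m m'. mv m m' \<or> mv m' m) (w + y) (w + z)" using step(2) mv_add by blast
  from rtranclp.rtrancl_into_rtrancl[OF step.IH this] show ?case .
qed simp

lemma eqv_add2: "eqv m m' \<Longrightarrow> eqv (m + w) (m' + w)"
  using eqv_add[of m m' w] by (simp add: add.commute)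

lemma mv_mdeg: "mv m m' \<Longrightarrow> mdeg m = mdeg m'"
  unfolding mv_def by (auto simp: mdeg_add)

lemma eqv_mdeg: "eqv m m' \<Longrightarrow> mdeg m = mdeg m'"
  unfolding eqv_def by (induction rule: rtranclp_induct) (auto dest: mv_mdeg)

lemma mv_I_L: "mv m m' \<Longrightarrow> (Poly_Mapping.single m 1 - Poly_Mapping.single m' 1 :: ('a::lattice,'k::comm_ring_1) mpoly) \<in> I_L"
proof -
  assume "mv m m'"
  then obtain w u v where h: "\<not> u \<le> v" "\<not> v \<le> u" "m = w + E u + E v" "m' = w + E (sup u v) + E (inf u v)"
    unfolding mv_def by blast
  have "Poly_Mapping.single m 1 - Poly_Mapping.single m' 1 =
        Poly_Mapping.single w 1 * (basic_binomial u v :: ('a,'k) mpoly)"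
    by (simp add: h basic_binomial_def right_diff_distrib single_Var2)
  also have "\<dots> \<in> I_L" by (rule is_ideal_mult[OF I_L_is_ideal basic_binomial_in_I_L[OF h(1,2)]])
  finally show ?thesis .
qed

lemma eqv_I_L: "eqv m m' \<Longrightarrow> (Poly_Mapping.single m 1 - Poly_Mapping.single m' 1 :: ('a::lattice,'k::comm_ring_1) mpoly) \<in> I_L"
  unfolding eqv_def
proof (induction rule: rtranclp_induct)
  case base
  show ?case using is_ideal_def I_L_is_ideal by auto
next
  case (step y z)
  have "(Poly_Mapping.single y 1 - Poly_Mapping.single z 1 :: ('a,'k) mpoly) \<in> I_L"
  proof (cases "mv y z")
    case True then show ?thesis by (rule mv_I_L)
  next
    case False
    then have "mv z y" using step by blast
    from is_ideal_mult[OF I_L_is_ideal mv_I_L[OF this], of "-1"] show ?thesis by simp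
  qed
  from is_ideal_add[OF I_L_is_ideal step.IH this] show ?case by simp
qed

definition cls :: "('a::lattice \<Rightarrow>\<^sub>0 nat) \<Rightarrow> ('a \<Rightarrow>\<^sub>0 nat) set" where
  "cls m = {n. eqv m n}"

definition live :: "'a::lattice set \<Rightarrow> ('a \<Rightarrow>\<^sub>0 nat) \<Rightarrow> bool" where
  "live S m \<longleftrightarrow> (\<forall>n. eqv m n \<longrightarrow> Poly_Mapping.keys n \<inter> S = {})"

lemma kills_cls_I_L: "kills (cls m) (I_L :: ('a::lattice,'k::comm_ring_1) mpoly set)"
proof (rule kills_I_L)
  fix w :: "'a \<Rightarrow>\<^sub>0 nat" and u v :: 'a
  assume "\<not> u \<le> v" "\<not> v \<le> u"
  then have "mv (w + E u + E v) (w + E (sup u v) + E (inf u v))" unfolding mv_def by blast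
  then have e: "eqv (w + E u + E v) (w + E (sup u v) + E (inf u v))" by (rule mv_eqv)
  show "(w + E u + E v \<in> cls m) = (w + E (sup u v) + E (inf u v) \<in> cls m)"
    unfolding cls_def using eqv_trans[OF _ e] eqv_trans[OF _ eqv_sym[OF e]] by blast
qed

lemma kills_cls_Var:
  assumes "live S m"
  shows "kills (cls m) ((Var ` S) :: ('a::lattice,'k::comm_ring_1) mpoly set)"
proof (rule kills_Var)
  fix w s assume "s \<in> S"
  moreover have "s \<in> Poly_Mapping.keys (w + E s)" by (simp add: in_keys_iff lookup_add)
  ultimately show "w + E s \<notin> cls m" using assms unfolding live_def cls_def by blast
qed

lemma kills_cls_gI:
  assumes "live S m"
  shows "kills (cls m) (gI S :: ('a::lattice,'k::comm_ring_1) mpoly set)"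
  by (intro kills_ideal_gen kills_Un kills_cls_I_L kills_cls_Var assms)

lemma psi_cls_zero:
  "live S m \<Longrightarrow> r \<in> (gI S :: ('a::lattice,'k::comm_ring_1) mpoly set) \<Longrightarrow> psi (cls m) r = 0"
  by (rule kills_mem[OF kills_Un[OF kills_cls_I_L kills_cls_Var]])


lemma live_eqv: "live S m \<Longrightarrow> eqv m n \<Longrightarrow> live S n"
  unfolding live_def using eqv_trans eqv_sym by blast

lemma pm_minus_add: "Poly_Mapping.lookup n s \<ge> 1 \<Longrightarrow> (n - E s) + E s = (n :: 'a \<Rightarrow>\<^sub>0 nat)"
  by (rule poly_mapping_eqI) (auto simp: lookup_add lookup_minus lookup_single when_def)

lemma gI_ideal: "is_ideal (gI S :: ('a::lattice,'k::comm_ring_1) mpoly set)"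
  by (rule ideal_gen_is_ideal)

lemma single_dead:
  assumes "eqv w n" "s \<in> Poly_Mapping.keys n" "s \<in> S"
  shows "(Poly_Mapping.single w 1 :: ('a::lattice,'k::comm_ring_1) mpoly) \<in> gI S"
proof -
  have "Poly_Mapping.lookup n s \<ge> 1" using assms(2) by (simp add: in_keys_iff)
  then have "Poly_Mapping.single n 1 = Poly_Mapping.single (n - E s) 1 * (Var s :: ('a,'k) mpoly)"
    by (simp add: single_Var pm_minus_add)
  also have "\<dots> \<in> gI S" using Var_in_gI[OF assms(3)] by (rule is_ideal_mult[OF gI_ideal])
  finally have n: "(Poly_Mapping.single n 1 :: ('a,'k) mpoly) \<in> gI S" .
  have "(Poly_Mapping.single w 1 - Poly_Mapping.single n 1 :: ('a,'k) mpoly) \<in> gI S"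
    using eqv_I_L[OF assms(1)] I_L_sub_gI by blast
  from is_ideal_add[OF gI_ideal this n] show ?thesis by simp
qed

lemma single_as_mult: "Poly_Mapping.single w c = Poly_Mapping.single 0 c * (Poly_Mapping.single w 1 :: ('a,'k::comm_ring_1) mpoly)"
  by (simp add: mult_single)

lemma complete:
  fixes r :: "('a::lattice,'k::comm_ring_1) mpoly"
  assumes "\<And>m. live S m \<Longrightarrow> psi (cls m) r = 0"
  shows "r \<in> gI S"
  using assms
proof (induction "card (Poly_Mapping.keys r)" arbitrary: r rule: less_induct)
  case less
  show ?case
  proof (cases "Poly_Mapping.keys r = {}")
    case True
    then have "r = 0" by simp
    have "is_ideal (gI S :: ('a,'k) mpoly set)" by (rule gI_ideal)
    then show ?thesis using \<open>r = 0\<close> unfolding is_ideal_def by simp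
  next
    case False
    then obtain w where wk: "w \<in> Poly_Mapping.keys r" by blast
    let ?c = "Poly_Mapping.lookup r w"
    show ?thesis
    proof (cases "live S w")
      case False
      then obtain n s where ns: "eqv w n" "s \<in> Poly_Mapping.keys n" "s \<in> S"
        unfolding live_def by blast
      have sw: "(Poly_Mapping.single w ?c :: ('a,'k) mpoly) \<in> gI S"
        by (subst single_as_mult) (rule is_ideal_mult[OF gI_ideal single_dead[OF ns]])
      define r' where "r' = r - Poly_Mapping.single w ?c"
      have kr': "Poly_Mapping.keys r' = Poly_Mapping.keys r - {w}"
        unfolding r'_def by (auto simp: in_keys_iff lookup_minus lookup_single when_def split: if_splits)
      have card: "card (Poly_Mapping.keys r') < card (Poly_Mapping.keys r)"
        unfolding kr' by (rule card_Diff1_less[OF finite_keys wk])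
      have "r' \<in> gI S"
      proof (rule less.hyps[OF card])
        fix m assume lm: "live S m"
        have "w \<notin> cls m" using lm False live_eqv unfolding cls_def by blast
        then show "psi (cls m) r' = 0"
          unfolding r'_def using less.prems[OF lm] by (simp add: psi_diff psi_single)
      qed
      from is_ideal_add[OF gI_ideal this sw] show ?thesis by (simp add: r'_def)
    next
      case True
      have "psi (cls w) r = 0" using less.prems[OF True] .
      have ex: "\<exists>w'. w' \<noteq> w \<and> w' \<in> Poly_Mapping.keys r \<and> eqv w w'"
      proof (rule ccontr)
        assume "\<not> ?thesis"
        then have "Poly_Mapping.keys r \<inter> cls w = {w}" using wk by (auto simp: cls_def)
        then have "psi (cls w) r = ?c" by (simp add: psi_def)
        then show False using \<open>psi (cls w) r = 0\<close> wk by (simp add: in_keys_iff)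
      qed
      then obtain w' where w': "w' \<noteq> w" "w' \<in> Poly_Mapping.keys r" "eqv w w'" by blast
      define d where "d = (Poly_Mapping.single 0 ?c * (Poly_Mapping.single w 1 - Poly_Mapping.single w' 1) :: ('a,'k) mpoly)"
      have dI: "d \<in> gI S" unfolding d_def
        using is_ideal_mult[OF gI_ideal] eqv_I_L[OF w'(3)] I_L_sub_gI by blast
      have d': "d = Poly_Mapping.single w ?c - Poly_Mapping.single w' ?c"
        unfolding d_def by (simp add: right_diff_distrib mult_single)
      define r' where "r' = r - d"
      have kr': "Poly_Mapping.keys r' \<subseteq> Poly_Mapping.keys r - {w}"
        unfolding r'_def d' using w'(1,2)
        by (auto simp: in_keys_iff lookup_minus lookup_single when_def split: if_splits)
      have card: "card (Poly_Mapping.keys r') < card (Poly_Mapping.keys r)"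
        using kr' wk by (meson card_Diff1_less finite_keys card_mono le_less_trans finite_Diff)
      have "r' \<in> gI S"
      proof (rule less.hyps[OF card])
        fix m assume lm: "live S m"
        have "w \<in> cls m \<longleftrightarrow> w' \<in> cls m" using w'(3) eqv_trans eqv_sym unfolding cls_def by blast
        then show "psi (cls m) r' = 0"
          unfolding r'_def d' using less.prems[OF lm] by (simp add: psi_diff psi_single)
      qed
      from is_ideal_add[OF gI_ideal this dI] show ?thesis by (simp add: r'_def)
    qed
  qed
qed


definition mon :: "'a list \<Rightarrow> ('a \<Rightarrow>\<^sub>0 nat)" where
  "mon xs = sum_list (map E xs)"

lemma mon_Nil [simp]: "mon [] = 0" by (simp add: mon_def)
lemma mon_Cons [simp]: "mon (x # xs) = E x + mon xs" by (simp add: mon_def)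

lemma lookup_mon: "Poly_Mapping.lookup (mon xs) x = count_list xs x"
  by (induction xs) (auto simp: lookup_add lookup_single when_def)

lemma keys_mon: "Poly_Mapping.keys (mon xs) = set xs"
  by (auto simp: in_keys_iff lookup_mon count_list_0_iff)

lemma mdeg_mon: "mdeg (mon xs) = length xs"
  by (induction xs) (simp_all add: mdeg_add)

lemma keys_add_nat: "Poly_Mapping.keys (a + b :: 'a \<Rightarrow>\<^sub>0 nat) = Poly_Mapping.keys a \<union> Poly_Mapping.keys b"
  by (auto simp: in_keys_iff lookup_add)

lemma ex_mon: "\<exists>xs. n = mon xs"
proof (induction "mdeg n" arbitrary: n)
  case 0
  then have "n = 0" using mdeg_eq_0 by metis
  then show ?case by (metis mon_Nil)
next
  case (Suc k)
  then have "n \<noteq> 0" by auto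
  then obtain s where s: "s \<in> Poly_Mapping.keys n"
    by (metis in_keys_iff lookup_zero poly_mapping_eqI)
  then have ge: "Poly_Mapping.lookup n s \<ge> 1" by (simp add: in_keys_iff)
  have eq: "n = E s + (n - E s)" using pm_minus_add[OF ge] by (simp add: add.commute)
  have "mdeg (n - E s) = k" using Suc(2) arg_cong[OF eq, of mdeg] by (simp add: mdeg_add)
  then obtain xs where "n - E s = mon xs" using Suc(1) by metis
  then have "n = mon (s # xs)" using eq by simp
  then show ?case by blast
qed

fun ins :: "'a::lattice \<Rightarrow> 'a list \<Rightarrow> 'a list" where
  "ins v [] = [v]"
| "ins v (c # cs) = inf v c # ins (sup v c) cs"

fun srt :: "'a::lattice list \<Rightarrow> 'a list" where
  "srt [] = []"
| "srt (x # xs) = ins x (srt xs)"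

lemma length_ins [simp]: "length (ins v cs) = Suc (length cs)"
  by (induction cs arbitrary: v) auto

lemma length_srt [simp]: "length (srt xs) = length xs"
  by (induction xs) auto

lemma eqv_pair: "eqv (E v + E c) (E (inf v c) + E (sup v (c::'a::lattice)))"
proof (cases "v \<le> c \<or> c \<le> v")
  case True
  then show ?thesis
  proof
    assume "v \<le> c" then show ?thesis by (simp add: inf_absorb1 sup_absorb2)
  next
    assume "c \<le> v" then show ?thesis by (simp add: inf_absorb2 sup_absorb1 add.commute)
  qed
next
  case False
  then have "mv (0 + E v + E c) (0 + E (sup v c) + E (inf v c))" unfolding mv_def by blast
  then show ?thesis using mv_eqv by (fastforce simp: add.commute)
qed

lemma eqv_ins: "eqv (E v + mon cs) (mon (ins v cs))"
proof (induction cs arbitrary: v)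
  case Nil
  then show ?case by simp
next
  case (Cons c cs)
  have "eqv (E v + E c + mon cs) (E (inf v c) + E (sup v c) + mon cs)"
    by (rule eqv_add2[OF eqv_pair])
  moreover have "eqv (E (inf v c) + (E (sup v c) + mon cs)) (E (inf v c) + mon (ins (sup v c) cs))"
    by (rule eqv_add[OF Cons.IH])
  ultimately show ?case by (simp add: add.assoc eqv_trans)
qed

lemma eqv_srt: "eqv (mon xs) (mon (srt xs))"
proof (induction xs)
  case (Cons x xs)
  have "eqv (E x + mon xs) (E x + mon (srt xs))" by (rule eqv_add[OF Cons.IH])
  then show ?case using eqv_ins eqv_trans by fastforce
qed simp

lemma ins_lb: "z \<le> v \<Longrightarrow> (\<forall>c\<in>set cs. z \<le> c) \<Longrightarrow> \<forall>y\<in>set (ins v cs). z \<le> y"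
  by (induction cs arbitrary: v) (auto intro: le_supI1)

lemma ins_sorted: "sorted_wrt (\<le>) cs \<Longrightarrow> sorted_wrt (\<le>) (ins v cs)"
proof (induction cs arbitrary: v)
  case (Cons c cs)
  have "\<forall>y\<in>set (ins (sup v c) cs). inf v c \<le> y"
    by (rule ins_lb) (use Cons.prems in \<open>auto intro: le_supI1 order_trans[OF inf_le2]\<close>)
  then show ?case using Cons by simp
qed simp

lemma srt_sorted: "sorted_wrt (\<le>) (srt xs)"
  by (induction xs) (auto intro: ins_sorted)


lemma Inf_fin_pair: "Inf_fin {u, v} = inf u (v::'a::lattice)"
  by simp

lemma Inf_fin_swap:
  assumes "finite A"
  shows "Inf_fin (A \<union> {u, v}) = Inf_fin (A \<union> {sup u v, inf u (v::'a::lattice)})"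
proof (cases "A = {}")
  case True
  then show ?thesis by (simp add: inf_absorb2 le_supI1)
next
  case False
  have "Inf_fin (A \<union> {u, v}) = inf u (inf v (Inf_fin A))"
    using assms False by simp
  moreover have "Inf_fin (A \<union> {sup u v, inf u v}) = inf (sup u v) (inf (inf u v) (Inf_fin A))"
    using assms False by simp
  moreover have "inf (sup u v) (inf u v) = inf u v" by (simp add: inf_absorb2 le_supI1)
  ultimately show ?thesis by (metis inf_assoc)
qed

lemma mv_meet: "mv m m' \<Longrightarrow> Inf_fin (Poly_Mapping.keys m) = Inf_fin (Poly_Mapping.keys m')"
proof -
  assume "mv m m'"
  then obtain w u v where h: "m = w + E u + E v" "m' = w + E (sup u v) + E (inf u v)"
    unfolding mv_def by blast
  have "Poly_Mapping.keys m = Poly_Mapping.keys w \<union> {u, v}" by (auto simp: h keys_add_nat)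
  moreover have "Poly_Mapping.keys m' = Poly_Mapping.keys w \<union> {sup u v, inf u v}" by (auto simp: h keys_add_nat)
  ultimately show ?thesis using Inf_fin_swap[OF finite_keys] by simp
qed

lemma eqv_meet: "eqv m m' \<Longrightarrow> Inf_fin (Poly_Mapping.keys m) = Inf_fin (Poly_Mapping.keys m')"
  unfolding eqv_def
  by (induction rule: rtranclp_induct) (auto dest: mv_meet)

lemma sorted_Inf_fin: "sorted_wrt (\<le>) (x # xs) \<Longrightarrow> Inf_fin (set (x # xs)) = (x::'a::lattice)"
  by (rule antisym) (auto intro: Inf_fin.coboundedI Inf_fin.boundedI)

lemma meet_key:
  assumes "n \<noteq> 0"
  shows "\<exists>n'. eqv n n' \<and> Inf_fin (Poly_Mapping.keys n) \<in> Poly_Mapping.keys n'"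
proof -
  obtain xs where xs: "n = mon xs" using ex_mon by blast
  have "xs \<noteq> []" using assms xs by auto
  then obtain x cs where c: "srt xs = x # cs" by (metis length_0_conv length_srt neq_Nil_conv)
  have e: "eqv n (mon (srt xs))" using xs eqv_srt by simp
  have "Inf_fin (Poly_Mapping.keys n) = Inf_fin (set (x # cs))"
    using eqv_meet[OF e] by (simp add: c keys_mon keys_add_nat)
  also have "\<dots> = x" using srt_sorted[of xs] c sorted_Inf_fin by metis
  finally have "Inf_fin (Poly_Mapping.keys n) \<in> Poly_Mapping.keys (mon (srt xs))"
    by (simp add: c keys_mon keys_add_nat)
  then show ?thesis using e by blast
qed

definition jp :: "'a::lattice \<Rightarrow> bool" where
  "jp j \<longleftrightarrow> (\<forall>u v. j \<le> sup u v \<longrightarrow> j \<le> u \<or> j \<le> v)"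

definition cnt :: "'a::lattice \<Rightarrow> ('a \<Rightarrow>\<^sub>0 nat) \<Rightarrow> nat" where
  "cnt j n = (\<Sum>x\<in>Poly_Mapping.keys n. if j \<le> x then Poly_Mapping.lookup n x else 0)"

lemma cnt_superset: "finite A \<Longrightarrow> Poly_Mapping.keys n \<subseteq> A \<Longrightarrow>
  cnt j n = (\<Sum>x\<in>A. if j \<le> x then Poly_Mapping.lookup n x else 0)"
  unfolding cnt_def by (rule sum.mono_neutral_left) (auto simp: in_keys_iff)

lemma cnt_add: "cnt j (a + b) = cnt j a + cnt j b"
proof -
  let ?A = "Poly_Mapping.keys a \<union> Poly_Mapping.keys b"
  have "cnt j (a + b) = (\<Sum>x\<in>?A. if j \<le> x then Poly_Mapping.lookup (a + b) x else 0)"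
    by (rule cnt_superset) (auto simp: keys_add_nat)
  moreover have "cnt j a = (\<Sum>x\<in>?A. if j \<le> x then Poly_Mapping.lookup a x else 0)"
    "cnt j b = (\<Sum>x\<in>?A. if j \<le> x then Poly_Mapping.lookup b x else 0)"
    by (rule cnt_superset; auto)+
  moreover have "(\<Sum>x\<in>?A. if j \<le> x then Poly_Mapping.lookup (a + b) x else 0) =
     (\<Sum>x\<in>?A. (if j \<le> x then Poly_Mapping.lookup a x else 0) + (if j \<le> x then Poly_Mapping.lookup b x else 0))"
    by (rule sum.cong) (auto simp: lookup_add)
  ultimately show ?thesis by (simp add: sum.distrib)
qed

lemma cnt_E: "cnt j (E x) = (if j \<le> x then 1 else 0)"
  by (simp add: cnt_def)

lemma cnt_zero [simp]: "cnt j 0 = 0"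
  by (simp add: cnt_def)

lemma cnt_mon: "cnt j (mon xs) = length (filter (\<lambda>x. j \<le> x) xs)"
  by (induction xs) (simp_all add: cnt_add cnt_E)

lemma mv_cnt: "jp j \<Longrightarrow> mv m m' \<Longrightarrow> cnt j m = cnt j m'"
proof -
  assume j: "jp j" and "mv m m'"
  then obtain w u v where h: "m = w + E u + E v" "m' = w + E (sup u v) + E (inf u v)"
    unfolding mv_def by blast
  have "j \<le> sup u v \<longleftrightarrow> j \<le> u \<or> j \<le> v" using j unfolding jp_def by (auto intro: le_supI1 le_supI2)
  then show ?thesis by (auto simp: h cnt_add cnt_E)
qed

lemma eqv_cnt:
  assumes j: "jp j" shows "eqv m m' \<Longrightarrow> cnt j m = cnt j m'"
  unfolding eqv_def
  by (induction rule: rtranclp_induct) (auto dest: mv_cnt[OF j])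

lemma sep:
  assumes D: "class.distrib_lattice (inf :: 'a::{finite,lattice} \<Rightarrow> 'a \<Rightarrow> 'a) (\<le>) (<) sup"
    and nxy: "\<not> x \<le> (y::'a)"
  shows "\<exists>j. jp j \<and> j \<le> x \<and> \<not> j \<le> y"
proof -
  interpret DL: distrib_lattice "inf :: 'a \<Rightarrow> 'a \<Rightarrow> 'a" "(\<le>)" "(<)" sup by (rule D)
  let ?A = "{z. z \<le> x \<and> \<not> z \<le> y}"
  have "x \<in> ?A" using nxy by simp
  from finite_has_minimal2[OF finite this] obtain j where
    jA: "j \<in> ?A" and jmin: "\<forall>b\<in>?A. b \<le> j \<longrightarrow> j = b" by blast
  have "jp j" unfolding jp_def
  proof (intro allI impI)
    fix u v assume juv: "j \<le> sup u v"
    have jeq: "j = sup (inf j u) (inf j v)"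
      using juv DL.inf_sup_distrib1[of j u v] by (simp add: inf_absorb1)
    show "j \<le> u \<or> j \<le> v"
    proof (rule ccontr)
      assume "\<not> (j \<le> u \<or> j \<le> v)"
      then have nu: "\<not> j \<le> u" and nv: "\<not> j \<le> v" by auto
      have "inf j u \<le> y"
      proof (rule ccontr)
        assume "\<not> inf j u \<le> y"
        then have "inf j u \<in> ?A" using jA by (auto intro: order_trans[OF inf_le1])
        then have "j = inf j u" using jmin by simp
        then show False using nu by (metis inf_le2)
      qed
      moreover have "inf j v \<le> y"
      proof (rule ccontr)
        assume "\<not> inf j v \<le> y"
        then have "inf j v \<in> ?A" using jA by (auto intro: order_trans[OF inf_le1])
        then have "j = inf j v" using jmin by simp
        then show False using nv by (metis inf_le2)
      qed
      ultimately have "j \<le> y" using jeq by (metis sup_least)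
      then show False using jA by simp
    qed
  qed
  then show ?thesis using jA by blast
qed

lemma filter_full:
  assumes "sorted_wrt (\<le>) (x # xs)"
  shows "length (filter (\<lambda>z. j \<le> z) (x # xs)) = length (x # xs) \<longleftrightarrow> j \<le> (x::'a::lattice)"
proof
  assume "length (filter (\<lambda>z. j \<le> z) (x # xs)) = length (x # xs)"
  moreover have "length (filter (\<lambda>z. j \<le> z) xs) \<le> length xs" by (rule length_filter_le)
  ultimately show "j \<le> x" by (cases "j \<le> x") auto
next
  assume jx: "j \<le> x"
  have "\<forall>z\<in>set (x # xs). j \<le> z" using assms jx by (auto intro: order_trans)
  then show "length (filter (\<lambda>z. j \<le> z) (x # xs)) = length (x # xs)"
    by (simp only: filter_True)
qed

lemma chain_eq:
  assumes D: "class.distrib_lattice (inf :: 'a::{finite,lattice} \<Rightarrow> 'a \<Rightarrow> 'a) (\<le>) (<) sup"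
  shows "sorted_wrt (\<le>) c \<Longrightarrow> sorted_wrt (\<le>) c' \<Longrightarrow> length c = length c' \<Longrightarrow>
    (\<forall>j. jp j \<longrightarrow> cnt j (mon c) = cnt j (mon c')) \<Longrightarrow> c = (c'::'a list)"
proof (induction c arbitrary: c')
  case Nil
  then show ?case by simp
next
  case (Cons x xs)
  then obtain y ys where c': "c' = y # ys" by (cases c') auto
  have iff: "j \<le> x \<longleftrightarrow> j \<le> y" if "jp j" for j
  proof -
    have "cnt j (mon (x # xs)) = cnt j (mon (y # ys))" using Cons.prems(4) that c' by blast
    then have "length (filter (\<lambda>z. j \<le> z) (x # xs)) = length (x # xs) \<longleftrightarrow>
               length (filter (\<lambda>z. j \<le> z) (y # ys)) = length (y # ys)"
      using Cons.prems(3) c' by (simp only: cnt_mon)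
    then show ?thesis using filter_full[OF Cons.prems(1)] filter_full[of y ys j] Cons.prems(2) c' by simp
  qed
  have xy: "x = y"
  proof (rule antisym)
    show "x \<le> y" using sep[OF D, of x y] iff by blast
    show "y \<le> x" using sep[OF D, of y x] iff by blast
  qed
  have "xs = ys"
  proof (rule Cons.IH)
    show "sorted_wrt (\<le>) xs" using Cons.prems(1) by simp
    show "sorted_wrt (\<le>) ys" using Cons.prems(2) c' by simp
    show "length xs = length ys" using Cons.prems(3) c' by simp
    show "\<forall>j. jp j \<longrightarrow> cnt j (mon xs) = cnt j (mon ys)"
      using Cons.prems(4) c' xy by (simp add: cnt_add)
  qed
  then show ?case using xy c' by simp
qed

lemma cancel:
  assumes D: "class.distrib_lattice (inf :: 'a::{finite,lattice} \<Rightarrow> 'a \<Rightarrow> 'a) (\<le>) (<) sup"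
    and e: "eqv (m + E a) (m' + E (a::'a))"
  shows "eqv m m'"
proof -
  obtain xs xs' where xs: "m = mon xs" "m' = mon xs'" using ex_mon by metis
  let ?c = "srt xs" and ?c' = "srt xs'"
  have e1: "eqv m (mon ?c)" "eqv m' (mon ?c')" using xs eqv_srt by auto
  have "mdeg (m + E a) = mdeg (m' + E a)" using eqv_mdeg[OF e] .
  then have "length xs = length xs'" using xs by (simp add: mdeg_add mdeg_mon)
  then have len: "length ?c = length ?c'" by simp
  have cn: "\<forall>j. jp j \<longrightarrow> cnt j (mon ?c) = cnt j (mon ?c')"
  proof (intro allI impI)
    fix j :: 'a assume j: "jp j"
    have "cnt j (m + E a) = cnt j (m' + E a)" using eqv_cnt[OF j e] .
    then have "cnt j m = cnt j m'" by (simp add: cnt_add)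
    then show "cnt j (mon ?c) = cnt j (mon ?c')"
      using eqv_cnt[OF j e1(1)] eqv_cnt[OF j e1(2)] by simp
  qed
  have "?c = ?c'" by (rule chain_eq[OF D srt_sorted srt_sorted len cn])
  then show ?thesis using e1 eqv_trans eqv_sym by metis
qed


definition down :: "'a::lattice set \<Rightarrow> bool" where
  "down S \<longleftrightarrow> (\<forall>x\<in>S. \<forall>y. y \<le> x \<longrightarrow> y \<in> S)"

lemma times_Var_expand:
  "r * (Var a :: ('a,'k::comm_ring_1) mpoly) =
   (\<Sum>w\<in>Poly_Mapping.keys r. Poly_Mapping.single (w + E a) (Poly_Mapping.lookup r w))"
proof -
  have "r * Var a = (\<Sum>w\<in>Poly_Mapping.keys r. Poly_Mapping.single w (Poly_Mapping.lookup r w)) * Var a"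
    by (subst poly_expand[of r]) simp
  also have "\<dots> = (\<Sum>w\<in>Poly_Mapping.keys r. Poly_Mapping.single (w + E a) (Poly_Mapping.lookup r w))"
    by (simp add: sum_distrib_right single_Var)
  finally show ?thesis .
qed

lemma psi_shift:
  assumes D: "class.distrib_lattice (inf :: 'a::{finite,lattice} \<Rightarrow> 'a \<Rightarrow> 'a) (\<le>) (<) sup"
  shows "psi (cls (m + E a)) (r * (Var a :: ('a,'k::comm_ring_1) mpoly)) = psi (cls m) r"
proof -
  have iff: "w + E a \<in> cls (m + E a) \<longleftrightarrow> w \<in> cls m" for w
    unfolding cls_def using cancel[OF D] eqv_add2 by blast
  have "psi (cls (m + E a)) (r * Var a) =
        (\<Sum>w\<in>Poly_Mapping.keys r. if w + E a \<in> cls (m + E a) then Poly_Mapping.lookup r w else 0)"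
    by (simp add: times_Var_expand psi_sum psi_single)
  also have "\<dots> = (\<Sum>w\<in>Poly_Mapping.keys r. if w \<in> cls m then Poly_Mapping.lookup r w else 0)"
    by (simp add: iff)
  also have "\<dots> = psi (cls m) r"
    unfolding psi_def by (simp add: sum.inter_restrict)
  finally show ?thesis .
qed

lemma Inf_fin_insert_keys:
  "m \<noteq> 0 \<Longrightarrow> Inf_fin (Poly_Mapping.keys (m + E a)) = inf a (Inf_fin (Poly_Mapping.keys m))"
  by (simp add: keys_add_nat)

lemma live_shift:
  assumes S: "down S" and aS: "a \<in> S" and amax: "\<forall>x\<in>S. a \<le> x \<longrightarrow> x = a"
    and T: "T = (S - {a}) \<union> {t. \<not> t \<le> a \<and> \<not> a \<le> t \<and> inf t a \<in> S - {a}}"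
    and lv: "live T m"
  shows "live (S - {a}) (m + E (a::'a::lattice))"
  unfolding live_def
proof (intro allI impI)
  fix n assume e: "eqv (m + E a) n"
  show "Poly_Mapping.keys n \<inter> (S - {a}) = {}"
  proof (rule ccontr)
    assume "Poly_Mapping.keys n \<inter> (S - {a}) \<noteq> {}"
    then obtain s where s: "s \<in> Poly_Mapping.keys n" "s \<in> S - {a}" by blast
    have "Inf_fin (Poly_Mapping.keys n) \<le> s" using s(1) by (simp add: Inf_fin.coboundedI)
    moreover have S': "down (S - {a})" using S amax unfolding down_def by blast
    ultimately have g: "Inf_fin (Poly_Mapping.keys n) \<in> S - {a}" using s(2) unfolding down_def by blast
    have mn: "Inf_fin (Poly_Mapping.keys n) = Inf_fin (Poly_Mapping.keys (m + E a))"
      using eqv_meet[OF e] by simp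
    show False
    proof (cases "m = 0")
      case True
      then show False using g mn by simp
    next
      case False
      define h where "h = Inf_fin (Poly_Mapping.keys m)"
      have ha: "inf h a \<in> S - {a}" using g mn Inf_fin_insert_keys[OF False] by (simp add: h_def inf_commute)
      obtain n' where n': "eqv m n'" "h \<in> Poly_Mapping.keys n'" using meet_key[OF False] h_def by blast
      have hT: "h \<notin> T" using lv n' unfolding live_def by blast
      show False
      proof (cases "h \<le> a")
        case True
        then show False using ha hT T by (simp add: inf_absorb1)
      next
        case False2: False
        show False
        proof (cases "a \<le> h")
          case True
          then show False using ha by (simp add: inf_absorb2)
        next
          case False
          then show False using ha hT T False2 by blast
        qed
      qed
    qed
  qed
qed

lemma down_T:
  assumes S: "down S" and aS: "a \<in> S" and amax: "\<forall>x\<in>S. a \<le> x \<longrightarrow> x = a"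
  shows "down ((S - {a}) \<union> {t. \<not> t \<le> a \<and> \<not> a \<le> t \<and> inf t (a::'a::lattice) \<in> S - {a}})"
  unfolding down_def
proof (intro ballI allI impI)
  have S': "down (S - {a})" using S amax unfolding down_def by blast
  fix x y assume x: "x \<in> (S - {a}) \<union> {t. \<not> t \<le> a \<and> \<not> a \<le> t \<and> inf t a \<in> S - {a}}" and yx: "y \<le> x"
  show "y \<in> (S - {a}) \<union> {t. \<not> t \<le> a \<and> \<not> a \<le> t \<and> inf t a \<in> S - {a}}"
  proof (cases "x \<in> S - {a}")
    case True
    then show ?thesis using S' yx unfolding down_def by blast
  next
    case False
    then have xa: "\<not> x \<le> a" "\<not> a \<le> x" "inf x a \<in> S - {a}" using x by auto
    show ?thesis
    proof (cases "y \<le> a")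
      case True
      then have "y \<in> S" using S aS unfolding down_def by blast
      moreover have "y \<noteq> a" using yx xa(2) by auto
      ultimately show ?thesis by blast
    next
      case False
      have "\<not> a \<le> y" using yx xa(2) order_trans by blast
      moreover have "inf y a \<in> S - {a}"
        using S' xa(3) inf_mono[OF yx order_refl[of a]] unfolding down_def by blast
      ultimately show ?thesis using False by blast
    qed
  qed
qed

lemma colon_eq:
  assumes D: "class.distrib_lattice (inf :: 'a::{finite,lattice} \<Rightarrow> 'a \<Rightarrow> 'a) (\<le>) (<) sup"
    and S: "down S" and aS: "a \<in> S" and amax: "\<forall>x\<in>S. a \<le> x \<longrightarrow> x = a"
    and T: "T = (S - {a}) \<union> {t. \<not> t \<le> a \<and> \<not> a \<le> t \<and> inf t a \<in> S - {a}}"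
  shows "colon (gI (S - {a})) (gI S) = (gI T :: ('a,'k::field) mpoly set)"
proof -
  let ?J = "gI (S - {a}) :: ('a,'k) mpoly set"
  have Jid: "is_ideal ?J" by (rule gI_ideal)
  have ciff: "r \<in> colon ?J (gI S) \<longleftrightarrow> r * Var a \<in> ?J" for r
  proof
    assume "r \<in> colon ?J (gI S)"
    then show "r * Var a \<in> ?J" using Var_in_gI[OF aS] unfolding colon_def by blast
  next
    assume ra: "r * Var a \<in> ?J"
    show "r \<in> colon ?J (gI S)" unfolding colon_def
    proof (rule CollectI, rule ballI)
      fix x :: "('a,'k) mpoly" assume "x \<in> gI S"
      then show "r * x \<in> ?J"
      proof (rule ideal_mult_gen[OF Jid, rotated])
        fix t :: "('a,'k) mpoly" assume "t \<in> I_L \<union> Var ` S"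
        then show "r * t \<in> ?J"
        proof
          assume "t \<in> I_L" then have "t \<in> ?J" using I_L_sub_gI by blast
          then show ?thesis by (rule is_ideal_mult[OF Jid])
        next
          assume "t \<in> Var ` S"
          then obtain s where s: "s \<in> S" "t = Var s" by blast
          show ?thesis
          proof (cases "s = a")
            case True then show ?thesis using ra s by simp
          next
            case False
            then have "s \<in> S - {a}" using s by blast
            then have "Var s \<in> ?J" by (rule Var_in_gI)
            then show ?thesis unfolding s(2) by (rule is_ideal_mult[OF Jid])
          qed
        qed
      qed
    qed
  qed
  show ?thesis
  proof (rule set_eqI)
    fix r :: "('a,'k) mpoly"
    show "r \<in> colon ?J (gI S) \<longleftrightarrow> r \<in> gI T"
    proof
      assume "r \<in> colon ?J (gI S)"
      then have ra: "r * Var a \<in> ?J" using ciff by blast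
      show "r \<in> gI T"
      proof (rule complete)
        fix m assume lm: "live T m"
        have "live (S - {a}) (m + E a)" by (rule live_shift[OF S aS amax T lm])
        from psi_cls_zero[OF this ra] show "psi (cls m) r = 0" using psi_shift[OF D, of m a r] by simp
      qed
    next
      assume rT: "r \<in> gI T"
      have "Var a * r \<in> ?J"
      proof (rule ideal_mult_gen[OF Jid _ rT])
        fix t :: "('a,'k) mpoly" assume "t \<in> I_L \<union> Var ` T"
        then show "Var a * t \<in> ?J"
        proof
          assume "t \<in> I_L" then have "t \<in> ?J" using I_L_sub_gI by blast
          then show ?thesis by (rule is_ideal_mult[OF Jid])
        next
          assume "t \<in> Var ` T"
          then obtain s where s: "s \<in> T" "t = Var s" by blast
          show ?thesis
          proof (cases "s \<in> S - {a}")
            case True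
            then have "Var s \<in> ?J" by (rule Var_in_gI)
            then show ?thesis unfolding s(2) by (rule is_ideal_mult[OF Jid])
          next
            case False
            then have sa: "\<not> s \<le> a" "\<not> a \<le> s" "inf s a \<in> S - {a}" using s T by auto
            have "Var a * Var s = basic_binomial s a + Var (sup s a) * (Var (inf s a) :: ('a,'k) mpoly)"
              by (simp add: basic_binomial_def mult.commute)
            moreover have "basic_binomial s a \<in> ?J"
              using basic_binomial_in_I_L[OF sa(1,2)] I_L_sub_gI by blast
            moreover have "Var (sup s a) * Var (inf s a) \<in> ?J"
              by (rule is_ideal_mult[OF Jid Var_in_gI[OF sa(3)]])
            ultimately show ?thesis unfolding s(2) by (metis is_ideal_add[OF Jid])
          qed
        qed
      qed
      then show "r \<in> colon ?J (gI S)" using ciff by (simp add: mult.commute)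
    qed
  qed
qed


lemma linear_form_Var: "linear_form (Var a :: ('a,'k::field) mpoly)"
  unfolding linear_form_def Var_def by simp

lemma distrib_implies_filtration:
  assumes D: "class.distrib_lattice (inf :: 'a::{finite,lattice} \<Rightarrow> 'a \<Rightarrow> 'a) (\<le>) (<) sup"
  shows "\<exists>F :: ('a, 'k::field) mpoly set set. combinatorial_koszul_filtration_H F"
proof -
  define F :: "('a, 'k) mpoly set set" where "F = {gI S | S. down S}"
  have comb: "\<forall>I\<in>F. \<exists>S. I = gI S" unfolding F_def by blast
  have c1: "\<forall>I\<in>F. \<exists>V. (\<forall>v\<in>V. linear_form v) \<and> I = ideal_gen (I_L \<union> V)"
  proof
    fix I assume "I \<in> F"
    then obtain S where "I = gI S" unfolding F_def by blast
    then show "\<exists>V. (\<forall>v\<in>V. linear_form v) \<and> I = ideal_gen (I_L \<union> V)"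
      by (intro exI[of _ "Var ` S"]) (auto simp: linear_form_Var)
  qed
  have c2: "I_L \<in> F"
  proof -
    have "down ({} :: 'a set)" by (simp add: down_def)
    then have "gI {} \<in> F" unfolding F_def by blast
    then show ?thesis by (simp only: gI_empty)
  qed
  have c3: "ideal_gen (I_L \<union> range Var) \<in> F"
  proof -
    have "down (UNIV :: 'a set)" by (simp add: down_def)
    then have "gI UNIV \<in> F" unfolding F_def by blast
    then show ?thesis by simp
  qed
  have c4: "\<exists>J\<in>F. J \<subset> I \<and> (\<exists>f. I = ideal_gen (J \<union> {f})) \<and> colon J I \<in> F"
    if IF: "I \<in> F" and IL: "I \<noteq> I_L" for I
  proof -
    obtain S where IS: "I = gI S" and S: "down S" using IF unfolding F_def by blast
    have "S \<noteq> {}" using IL IS gI_empty by metis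
    from finite_has_maximal[OF finite this] obtain a where
      aS: "a \<in> S" and amax0: "\<forall>b\<in>S. a \<le> b \<longrightarrow> a = b" by blast
    have amax: "\<forall>x\<in>S. a \<le> x \<longrightarrow> x = a" using amax0 by metis
    define T where "T = (S - {a}) \<union> {t. \<not> t \<le> a \<and> \<not> a \<le> t \<and> inf t a \<in> S - {a}}"
    let ?J = "gI (S - {a}) :: ('a,'k) mpoly set"
    have S': "down (S - {a})" using S amax unfolding down_def by blast
    have JF: "?J \<in> F" unfolding F_def using S' by blast
    have JI: "?J \<subset> I"
    proof
      show "?J \<subseteq> I" unfolding IS by (rule gI_mono) blast
      show "?J \<noteq> I"
      proof
        assume "?J = I"
        then have "S - {a} = S" using IS gI_inj by metis
        then show False using aS by blast
      qed
    qed
    have If: "I = ideal_gen (?J \<union> {Var a})"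
    proof
      show "I \<subseteq> ideal_gen (?J \<union> {Var a})"
        unfolding IS
      proof (rule ideal_gen_least[OF ideal_gen_is_ideal])
        show "I_L \<union> Var ` S \<subseteq> ideal_gen (?J \<union> {Var a})"
        proof
          fix x :: "('a,'k) mpoly" assume "x \<in> I_L \<union> Var ` S"
          then have "x \<in> ?J \<or> x = Var a"
          proof
            assume "x \<in> I_L" then show ?thesis using I_L_sub_gI by blast
          next
            assume "x \<in> Var ` S"
            then obtain s where "s \<in> S" "x = Var s" by blast
            then show ?thesis using Var_in_gI[of s "S - {a}"] by (cases "s = a") auto
          qed
          then show "x \<in> ideal_gen (?J \<union> {Var a})" using ideal_gen_mem by blast
        qed
      qed
      show "ideal_gen (?J \<union> {Var a}) \<subseteq> I"
        unfolding IS
      proof (rule ideal_gen_least[OF ideal_gen_is_ideal])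
        show "?J \<union> {Var a} \<subseteq> gI S" using gI_mono[of "S - {a}" S] Var_in_gI[OF aS] by blast
      qed
    qed
    have CT: "colon ?J I = gI T"
      unfolding IS by (rule colon_eq[OF D S aS amax T_def])
    have "down T" unfolding T_def by (rule down_T[OF S aS amax])
    then have "colon ?J I \<in> F" unfolding F_def CT by blast
    then show ?thesis using JF JI If by blast
  qed
  have "combinatorial_koszul_filtration_H F"
    unfolding combinatorial_koszul_filtration_H_def koszul_filtration_H_def
  proof (intro conjI)
    show "\<forall>I\<in>F. I \<noteq> I_L \<longrightarrow> (\<exists>J\<in>F. J \<subset> I \<and> (\<exists>f. I = ideal_gen (J \<union> {f})) \<and> colon J I \<in> F)"
      using c4 by blast
  qed (rule c1 c2 c3 comb)+
  then show ?thesis by blast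
qed

theorem theorem2p4:
  assumes "modular_lattice TYPE('a::{finite, lattice})"
  shows "class.distrib_lattice (inf :: 'a \<Rightarrow> 'a \<Rightarrow> 'a) (\<le>) (<) sup \<longleftrightarrow>
         (\<exists>F :: ('a, 'k::field) mpoly set set. combinatorial_koszul_filtration_H F)"
  using distrib_implies_filtration filtration_implies_distrib[OF assms] by blast


end
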